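(* In the setting of the context, $D^{\Lambda_W}$ is $C$-symmetric (i.e. $D^{\Lambda_W}C=-CD^{\Lambda_W}$) if and only if $\Lambda_W=\Lambda_C$. If $\Lambda=\{(f,f')\in\mathcal F\oplus\mathcal F:Af=Bf'\}$ for linear operators $A,B$ in $\mathcal F$, this occurs if and only if there exists a linear bijection $X$ on $\mathcal F$ such that $\overline B\,W\widetilde V_CW^{-1}=XA$ and $\overline A\,W\widetilde V_CW^{-1}=XB$. Furthermore, for $i\in\{p,c,r,d,ess\}$, $$\lambda\in\sigma_i(D^{\Lambda_W})\iff-\overline\lambda\in\sigma_i(D^{\Lambda_C}).$$ In particular, if $D^{\Lambda_W}$ is $C$-symmetric, then its spectrum is symmetric with respect to reflection over the imaginary axis.
   Context: Let $m\ge0$. A finite oriented metric graph $\mathbf G$ has a finite nonempty vertex set $\mathcal V$, finite sets $\mathcal I$ (internal) and $\mathcal E$ (external) of edges, $\mathcal J=\mathcal I\cup\mathcal E\ne\emptyset$, no loops. Each internal edge $i$ is identified with $I_i=(a_i,b_i)$, $a_i$, $b_i$ corresponding to its initial and terminal vertex. An external edge $e$ is identified with $(a_e,+\infty)$ ($\rho(e)=-1$) or $(-\infty,b_e)$ ($\rho(e)=1$), finite endpoint $\partial e$ corresponding to its vertex. $\mathscr H=\bigoplus_jL^2(I_j;\mathbb C^2)$, $\widetilde H^1=\bigoplus_jH^1(I_j;\mathbb C^2)$, $\Phi=(\phi_j)_j$; $D^{max}$ acts edgewise by $-i\sigma_1\phi_j'+m\sigma_3\phi_j$ ($\sigma_1=\begin{pmatrix}0&1\\1&0\end{pmatrix}$,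 $\sigma_3=\operatorname{diag}(1,-1)$). $\mathcal G=\bigoplus_j\mathcal G_j$, $\mathcal G_i=\mathbb C^2$, $\mathcal G_e=\mathbb C$; $\Gamma^k=\bigoplus_j\Gamma^k_j$, $\Gamma^1_i\Phi=(\phi_i^1(a_i),\phi_i^1(b_i))^T$, $\Gamma^2_i\Phi=(i\phi_i^2(a_i),-i\phi_i^2(b_i))^T$, $\Gamma^1_e\Phi=\phi_e^1(\partial e)$, $\Gamma^2_e\Phi=-i\rho(e)\phi^2_e(\partial e)$. Vertex space $\mathcal F=\bigoplus_v\mathbb C^{\deg v}$; coordinates of $\mathcal G$, $\mathcal F$ are labelled by pairs $(j,v)$, ordered in $\mathcal G$ edge by edge (initial vertex first for internal edges) and in $\mathcal F$ vertex by vertex (then by the fixed edge order); $W:\mathcal G\to\mathcal F$ is the permutation matrix sending coordinate $(j,v)$ of $\mathcal G$ to coordinate $(j,v)$ of $\mathcal F$. $C\Phi=(\sigma_1\overline{\phi_j})_j$ (antilinear). $\widetilde V_C=\bigoplus_j\widetilde V_{C,j}$ is the linear map on $\mathcal G$ with $\widetilde V_{C,j}\omega_j=i\sigma_3\omega_j$ for $j\in\mathcal I$ and $\widetilde V_{C,j}\omega_j=-i\rho(j)\omega_j$ for $j\in\mathcal E$, and $V_C\omega=\widetilde V_C\overline\omega$. $\Lambda$ is a linear relation in $\mathcal F$; $\Lambda_W=\{(f,f')\in\mathcal G\oplus\mathcal G:(Wf,Wf')\in\Lambda\}$; $\Lambda_C=\{(V_CW^{-1}f',V_CW^{-1}f):(f,f')\in\Lambda\}$;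 for a relation $\Theta$ in $\mathcal G$, $D^{\Theta}$ is the restriction of $D^{max}$ to $\{\Phi:(\Gamma^1\Phi,\Gamma^2\Phi)\in\Theta\}$. $\sigma_p,\sigma_c,\sigma_r$ are the point, continuous and residual spectrum; $\sigma_d$ the isolated eigenvalues of finite algebraic multiplicity; $\sigma_{ess}=\sigma\setminus\sigma_d$. *)

theory Defs
  imports "HOL-Analysis.Analysis"
begin

text \<open>The list g_edges fixes the edge order
 (its set is the edge set J), g_verts fixes the vertex order (its set is V).
 g_int is the set of internal edges; the external edges are J - g_int.
 For an internal edge i: g_ini i / g_ter i are its initial / terminal vertex and
 I_i = (g_a i, g_b i).  For an external edge e: g_ini e is its vertex, g_rho e is rho(e),
 and I_e = (g_a e, +inf) if rho(e) = -1, I_e = (-inf, g_b e) if rho(e) = 1.\<close>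

record ('j, 'v) mgraph =
  g_edges :: "'j list"
  g_verts :: "'v list"
  g_int   :: "'j set"
  g_ini   :: "'j \<Rightarrow> 'v"
  g_ter   :: "'j \<Rightarrow> 'v"
  g_a     :: "'j \<Rightarrow> real"
  g_b     :: "'j \<Rightarrow> real"
  g_rho   :: "'j \<Rightarrow> real"

definition JJ :: "('j,'v) mgraph \<Rightarrow> 'j set" where
  "JJ G = set (g_edges G)"

definition EE :: "('j,'v) mgraph \<Rightarrow> 'j set" where
  "EE G = JJ G - g_int G"

definition wf_graph :: "('j,'v) mgraph \<Rightarrow> bool" where
  "wf_graph G \<longleftrightarrow> distinct (g_edges G) \<and> distinct (g_verts G)
     \<and> g_edges G \<noteq> [] \<and> g_verts G \<noteq> [] \<and> g_int G \<subseteq> JJ G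
     \<and> (\<forall>i\<in>g_int G. g_ini G i \<in> set (g_verts G) \<and> g_ter G i \<in> set (g_verts G)
            \<and> g_ini G i \<noteq> g_ter G i \<and> g_a G i < g_b G i)
     \<and> (\<forall>e\<in>EE G. g_ini G e \<in> set (g_verts G) \<and> (g_rho G e = -1 \<or> g_rho G e = 1))"

definition Ij :: "('j,'v) mgraph \<Rightarrow> 'j \<Rightarrow> real set" where
  "Ij G j = (if j \<in> g_int G then {g_a G j <..< g_b G j}
             else if g_rho G j = -1 then {g_a G j <..} else {..< g_b G j})"

text \<open>Coordinates of the space G (edge by edge, initial vertex first) and of the
 vertex space F (vertex by vertex, then by edge order), labelled by pairs (j,v).\<close>

definition glabels :: "('j,'v) mgraph \<Rightarrow> ('j \<times> 'v) list" where
  "glabels G = concat (map (\<lambda>j. if j \<in> g_int G then [(j, g_ini G j), (j, g_ter G j)]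
                                  else [(j, g_ini G j)]) (g_edges G))"

definition incident :: "('j,'v) mgraph \<Rightarrow> 'j \<Rightarrow> 'v \<Rightarrow> bool" where
  "incident G j v = (if j \<in> g_int G then g_ini G j = v \<or> g_ter G j = v else g_ini G j = v)"

definition flabels :: "('j,'v) mgraph \<Rightarrow> ('j \<times> 'v) list" where
  "flabels G = concat (map (\<lambda>v. map (\<lambda>j. (j, v)) (filter (\<lambda>j. incident G j v) (g_edges G)))
                           (g_verts G))"

definition NN :: "('j,'v) mgraph \<Rightarrow> nat" where
  "NN G = length (glabels G)"

section \<open>Finite-dimensional linear algebra on C^N (vectors nat => complex, zero beyond N)\<close>

type_synonym cvec = "nat \<Rightarrow> complex"
type_synonym cmat = "nat \<Rightarrow> nat \<Rightarrow> complex"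

definition vecs :: "nat \<Rightarrow> cvec set" where
  "vecs n = {f. \<forall>k\<ge>n. f k = 0}"

definition mv :: "nat \<Rightarrow> cmat \<Rightarrow> cvec \<Rightarrow> cvec" where
  "mv n M f = (\<lambda>k. if k < n then (\<Sum>l<n. M k l * f l) else 0)"

definition mm :: "nat \<Rightarrow> cmat \<Rightarrow> cmat \<Rightarrow> cmat" where
  "mm n M1 M2 = (\<lambda>k l. \<Sum>r<n. M1 k r * M2 r l)"

definition meq :: "nat \<Rightarrow> cmat \<Rightarrow> cmat \<Rightarrow> bool" where
  "meq n M1 M2 \<longleftrightarrow> (\<forall>k<n. \<forall>l<n. M1 k l = M2 k l)"

definition idm :: cmat where
  "idm = (\<lambda>k l. if k = l then 1 else 0)"

definition cnjm :: "cmat \<Rightarrow> cmat" where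
  "cnjm M = (\<lambda>k l. cnj (M k l))"

definition bij_mat :: "nat \<Rightarrow> cmat \<Rightarrow> bool" where
  "bij_mat n X \<longleftrightarrow> (\<exists>Y. meq n (mm n X Y) idm \<and> meq n (mm n Y X) idm)"

definition lin_rel :: "nat \<Rightarrow> (cvec \<times> cvec) set \<Rightarrow> bool" where
  "lin_rel n L \<longleftrightarrow> L \<subseteq> vecs n \<times> vecs n \<and> ((\<lambda>k. 0), (\<lambda>k. 0)) \<in> L
     \<and> (\<forall>f g f' g'. (f, f') \<in> L \<longrightarrow> (g, g') \<in> L \<longrightarrow> ((\<lambda>k. f k + g k), (\<lambda>k. f' k + g' k)) \<in> L)
     \<and> (\<forall>c f f'. (f, f') \<in> L \<longrightarrow> ((\<lambda>k. c * f k), (\<lambda>k. c * f' k)) \<in> L)"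

text \<open>The permutation matrix W : G -> F and its inverse (its transpose).\<close>
definition Wm :: "('j,'v) mgraph \<Rightarrow> cmat" where
  "Wm G = (\<lambda>k l. if k < NN G \<and> l < NN G \<and> flabels G ! k = glabels G ! l then 1 else 0)"

definition Winv :: "('j,'v) mgraph \<Rightarrow> cmat" where
  "Winv G = (\<lambda>k l. Wm G l k)"

definition Vt :: "('j,'v) mgraph \<Rightarrow> cmat" where
  "Vt G = (\<lambda>k l. if k = l \<and> k < NN G then
              (let (j, v) = glabels G ! k in
                 if j \<in> g_int G then (if v = g_ini G j then \<i> else - \<i>)
                 else - \<i> * complex_of_real (g_rho G j))
            else 0)"

definition VC :: "('j,'v) mgraph \<Rightarrow> cvec \<Rightarrow> cvec" where
  "VC G w = mv (NN G) (Vt G) (\<lambda>k. cnj (w k))"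

definition LamW :: "('j,'v) mgraph \<Rightarrow> (cvec \<times> cvec) set \<Rightarrow> (cvec \<times> cvec) set" where
  "LamW G L = {(f, f'). f \<in> vecs (NN G) \<and> f' \<in> vecs (NN G)
                  \<and> (mv (NN G) (Wm G) f, mv (NN G) (Wm G) f') \<in> L}"

definition LamC :: "('j,'v) mgraph \<Rightarrow> (cvec \<times> cvec) set \<Rightarrow> (cvec \<times> cvec) set" where
  "LamC G L = {(VC G (mv (NN G) (Winv G) f'), VC G (mv (NN G) (Winv G) f)) | f f'. (f, f') \<in> L}"

text \<open>Elements of the Hilbert space are represented by functions Phi j t = (phi_j^1(t), phi_j^2(t));
 only the values on I_j, j in J, matter, and elements are identified when the seminorm of the
 difference vanishes (a.e. equality).\<close>

type_synonym 'j fn = "'j \<Rightarrow> real \<Rightarrow> complex \<times> complex"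

definition L2on :: "real set \<Rightarrow> (real \<Rightarrow> complex) \<Rightarrow> bool" where
  "L2on S u \<longleftrightarrow> u \<in> borel_measurable (lebesgue_on S)
                 \<and> integrable (lebesgue_on S) (\<lambda>t. (cmod (u t))\<^sup>2)"

text \<open>u is (the continuous representative of) an H^1 function on the interval S with weak derivative g.\<close>
definition isderiv :: "real set \<Rightarrow> (real \<Rightarrow> complex) \<Rightarrow> (real \<Rightarrow> complex) \<Rightarrow> bool" where
  "isderiv S u g \<longleftrightarrow> L2on S u \<and> L2on S g
     \<and> (\<forall>x\<in>S. \<forall>y\<in>S. x \<le> y \<longrightarrow> (g has_integral (u y - u x)) {x..y})"

definition Hsp :: "('j,'v) mgraph \<Rightarrow> 'j fn set" where
  "Hsp G = {Phi. \<forall>j\<in>JJ G. L2on (Ij G j) (\<lambda>t. fst (Phi j t)) \<and> L2on (Ij G j) (\<lambda>t. snd (Phi j t))}"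

definition nrm :: "('j,'v) mgraph \<Rightarrow> 'j fn \<Rightarrow> real" where
  "nrm G Phi = sqrt (\<Sum>j\<in>JJ G. LINT t|lebesgue_on (Ij G j).
                        (cmod (fst (Phi j t)))\<^sup>2 + (cmod (snd (Phi j t)))\<^sup>2)"

definition fsub :: "'j fn \<Rightarrow> 'j fn \<Rightarrow> 'j fn" where
  "fsub Phi Psi = (\<lambda>j t. (fst (Phi j t) - fst (Psi j t), snd (Phi j t) - snd (Psi j t)))"

definition fscale :: "complex \<Rightarrow> 'j fn \<Rightarrow> 'j fn" where
  "fscale c Phi = (\<lambda>j t. (c * fst (Phi j t), c * snd (Phi j t)))"

definition fneg :: "'j fn \<Rightarrow> 'j fn" where
  "fneg Phi = (\<lambda>j t. (- fst (Phi j t), - snd (Phi j t)))"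

definition lincomb :: "'j fn list \<Rightarrow> (nat \<Rightarrow> complex) \<Rightarrow> 'j fn" where
  "lincomb fs c = (\<lambda>j t. ((\<Sum>k<length fs. c k * fst ((fs ! k) j t)),
                          (\<Sum>k<length fs. c k * snd ((fs ! k) j t))))"

definition Cop :: "'j fn \<Rightarrow> 'j fn" where
  "Cop Phi = (\<lambda>j t. (cnj (snd (Phi j t)), cnj (fst (Phi j t))))"

definition Dmax :: "('j,'v) mgraph \<Rightarrow> real \<Rightarrow> ('j fn \<times> 'j fn) set" where
  "Dmax G m = {(Phi, Psi). Phi \<in> Hsp G \<and> Psi \<in> Hsp G \<and>
     (\<exists>Phi'. (\<forall>j\<in>JJ G. isderiv (Ij G j) (\<lambda>t. fst (Phi j t)) (\<lambda>t. fst (Phi' j t))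
                      \<and> isderiv (Ij G j) (\<lambda>t. snd (Phi j t)) (\<lambda>t. snd (Phi' j t)))
        \<and> nrm G (fsub Psi (\<lambda>j t. (- \<i> * snd (Phi' j t) + complex_of_real m * fst (Phi j t),
                                   - \<i> * fst (Phi' j t) - complex_of_real m * snd (Phi j t)))) = 0)}"

definition bl :: "real \<Rightarrow> (real \<Rightarrow> complex) \<Rightarrow> complex" where
  "bl a u = Lim (at_right a) u"

definition br :: "real \<Rightarrow> (real \<Rightarrow> complex) \<Rightarrow> complex" where
  "br b u = Lim (at_left b) u"

definition bdry :: "('j,'v) mgraph \<Rightarrow> 'j \<Rightarrow> (real \<Rightarrow> complex) \<Rightarrow> complex" where
  "bdry G e u = (if g_rho G e = -1 then bl (g_a G e) u else br (g_b G e) u)"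

definition gam1 :: "('j,'v) mgraph \<Rightarrow> 'j fn \<Rightarrow> cvec" where
  "gam1 G Phi = (\<lambda>k. if k < NN G then
      (let (j, v) = glabels G ! k; u = (\<lambda>t. fst (Phi j t)) in
        if j \<in> g_int G then (if v = g_ini G j then bl (g_a G j) u else br (g_b G j) u)
        else bdry G j u)
     else 0)"

definition gam2 :: "('j,'v) mgraph \<Rightarrow> 'j fn \<Rightarrow> cvec" where
  "gam2 G Phi = (\<lambda>k. if k < NN G then
      (let (j, v) = glabels G ! k; u = (\<lambda>t. snd (Phi j t)) in
        if j \<in> g_int G then (if v = g_ini G j then \<i> * bl (g_a G j) u else - \<i> * br (g_b G j) u)
        else - \<i> * complex_of_real (g_rho G j) * bdry G j u)
     else 0)"

definition DTheta :: "('j,'v) mgraph \<Rightarrow> real \<Rightarrow> (cvec \<times> cvec) set \<Rightarrow> ('j fn \<times> 'j fn) set" where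
  "DTheta G m Th = {(Phi, Psi) \<in> Dmax G m. (gam1 G Phi, gam2 G Phi) \<in> Th}"

text \<open>C-symmetry D C = - C D (as operators, including domains).  Graph of DC is
 {(Phi,Psi). (C Phi, Psi) in D}; graph of -CD is {(Phi,Psi). (Phi, -C Psi) in D}.\<close>
definition Csym :: "('j fn \<times> 'j fn) set \<Rightarrow> bool" where
  "Csym D \<longleftrightarrow> (\<forall>Phi Psi. (Cop Phi, Psi) \<in> D \<longleftrightarrow> (Phi, fneg (Cop Psi)) \<in> D)"

definition in_resolvent :: "'a fn set \<Rightarrow> ('a fn \<Rightarrow> real) \<Rightarrow> ('a fn \<times> 'a fn) set \<Rightarrow> complex \<Rightarrow> bool" where
  "in_resolvent H nn D lam \<longleftrightarrow>
     (\<forall>(Phi, Psi)\<in>D. nn (fsub Psi (fscale lam Phi)) = 0 \<longrightarrow> nn Phi = 0)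
   \<and> (\<forall>g\<in>H. \<exists>(Phi, Psi)\<in>D. nn (fsub g (fsub Psi (fscale lam Phi))) = 0)
   \<and> (\<exists>c. \<forall>(Phi, Psi)\<in>D. nn Phi \<le> c * nn (fsub Psi (fscale lam Phi)))"

definition spec :: "'a fn set \<Rightarrow> ('a fn \<Rightarrow> real) \<Rightarrow> ('a fn \<times> 'a fn) set \<Rightarrow> complex set" where
  "spec H nn D = {lam. \<not> in_resolvent H nn D lam}"

definition spec_p :: "'a fn set \<Rightarrow> ('a fn \<Rightarrow> real) \<Rightarrow> ('a fn \<times> 'a fn) set \<Rightarrow> complex set" where
  "spec_p H nn D = {lam. \<exists>(Phi, Psi)\<in>D. nn Phi \<noteq> 0 \<and> nn (fsub Psi (fscale lam Phi)) = 0}"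

definition dense_range :: "'a fn set \<Rightarrow> ('a fn \<Rightarrow> real) \<Rightarrow> ('a fn \<times> 'a fn) set \<Rightarrow> complex \<Rightarrow> bool" where
  "dense_range H nn D lam \<longleftrightarrow>
     (\<forall>g\<in>H. \<forall>e>0. \<exists>(Phi, Psi)\<in>D. nn (fsub g (fsub Psi (fscale lam Phi))) < e)"

definition spec_c :: "'a fn set \<Rightarrow> ('a fn \<Rightarrow> real) \<Rightarrow> ('a fn \<times> 'a fn) set \<Rightarrow> complex set" where
  "spec_c H nn D = {lam \<in> spec H nn D. lam \<notin> spec_p H nn D \<and> dense_range H nn D lam}"

definition spec_r :: "'a fn set \<Rightarrow> ('a fn \<Rightarrow> real) \<Rightarrow> ('a fn \<times> 'a fn) set \<Rightarrow> complex set" where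
  "spec_r H nn D = {lam \<in> spec H nn D. lam \<notin> spec_p H nn D \<and> \<not> dense_range H nn D lam}"

text \<open>Generalized eigenspace: union over k of ker (D - lam)^k.\<close>
definition gen_eig :: "'a fn set \<Rightarrow> ('a fn \<Rightarrow> real) \<Rightarrow> ('a fn \<times> 'a fn) set \<Rightarrow> complex \<Rightarrow> 'a fn set" where
  "gen_eig H nn D lam = {Phi. \<exists>k Phis Psis. Phis 0 = Phi \<and> (\<forall>n\<le>k. Phis n \<in> H)
      \<and> (\<forall>n<k. (Phis n, Psis n) \<in> D
               \<and> nn (fsub (fsub (Psis n) (fscale lam (Phis n))) (Phis (Suc n))) = 0)
      \<and> nn (Phis k) = 0}"

definition fin_alg_mult :: "'a fn set \<Rightarrow> ('a fn \<Rightarrow> real) \<Rightarrow> ('a fn \<times> 'a fn) set \<Rightarrow> complex \<Rightarrow> bool" where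
  "fin_alg_mult H nn D lam \<longleftrightarrow> (\<exists>fs. set fs \<subseteq> H \<and>
      (\<forall>Phi\<in>gen_eig H nn D lam. \<exists>c. nn (fsub Phi (lincomb fs c)) = 0))"

definition spec_d :: "'a fn set \<Rightarrow> ('a fn \<Rightarrow> real) \<Rightarrow> ('a fn \<times> 'a fn) set \<Rightarrow> complex set" where
  "spec_d H nn D = {lam \<in> spec_p H nn D.
      (\<exists>e>0. \<forall>mu\<in>spec H nn D. mu \<noteq> lam \<longrightarrow> e \<le> cmod (mu - lam))
      \<and> fin_alg_mult H nn D lam}"

definition spec_ess :: "'a fn set \<Rightarrow> ('a fn \<Rightarrow> real) \<Rightarrow> ('a fn \<times> 'a fn) set \<Rightarrow> complex set" where
  "spec_ess H nn D = spec H nn D - spec_d H nn D"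

end

theory Submission
  imports Defs "HOL-Library.Function_Algebras"
begin

section \<open>Labels and the permutation W\<close>

lemma wfD:
  assumes "wf_graph G"
  shows "distinct (g_edges G)" "distinct (g_verts G)" "g_int G \<subseteq> JJ G"
    "\<And>i. i \<in> g_int G \<Longrightarrow> g_ini G i \<in> set (g_verts G) \<and> g_ter G i \<in> set (g_verts G)
            \<and> g_ini G i \<noteq> g_ter G i \<and> g_a G i < g_b G i"
    "\<And>e. e \<in> EE G \<Longrightarrow> g_ini G e \<in> set (g_verts G) \<and> (g_rho G e = -1 \<or> g_rho G e = 1)"
  using assms unfolding wf_graph_def by auto

lemma set_glabels:
  "set (glabels G) = {(j,v). j \<in> JJ G \<and> incident G j v}"
  unfolding glabels_def incident_def JJ_def by (auto split: if_splits)

lemma set_flabels: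
  assumes "wf_graph G"
  shows "set (flabels G) = {(j,v). j \<in> JJ G \<and> incident G j v}"
proof -
  have "incident G j v \<Longrightarrow> j \<in> JJ G \<Longrightarrow> v \<in> set (g_verts G)" for j v
    using wfD[OF assms] unfolding incident_def EE_def by (auto split: if_splits)
  then show ?thesis unfolding flabels_def JJ_def by auto
qed

lemma distinct_glabels:
  assumes "wf_graph G" shows "distinct (glabels G)"
  unfolding glabels_def
proof (rule distinct_concat)
  let ?f = "(\<lambda>j. if j \<in> g_int G then [(j, g_ini G j), (j, g_ter G j)] else [(j, g_ini G j)])"
  have "inj_on ?f (set (g_edges G))"
    by (rule inj_onI) (auto split: if_splits)
  then show "distinct (map ?f (g_edges G))"
    using wfD(1)[OF assms] by (simp add: distinct_map)
  show "\<And>ys. ys \<in> set (map ?f (g_edges G)) \<Longrightarrow> distinct ys"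
    using wfD(4)[OF assms] by auto
  show "\<And>ys zs. ys \<in> set (map ?f (g_edges G)) \<Longrightarrow> zs \<in> set (map ?f (g_edges G)) \<Longrightarrow> ys \<noteq> zs \<Longrightarrow> set ys \<inter> set zs = {}"
    by (auto split: if_splits)
qed

lemma distinct_flabels:
  assumes "wf_graph G" shows "distinct (flabels G)"
  unfolding flabels_def distinct_concat_iff
proof (intro conjI allI impI)
  let ?f = "(\<lambda>v. map (\<lambda>j. (j, v)) (filter (\<lambda>j. incident G j v) (g_edges G)))"
  have e: "removeAll [] (map ?f (g_verts G)) = map ?f (filter (\<lambda>v. ?f v \<noteq> []) (g_verts G))"
    by (induction "g_verts G") (auto simp: removeAll_filter_not_eq filter_map o_def)
  have "inj_on ?f (set (filter (\<lambda>v. ?f v \<noteq> []) (g_verts G)))"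
  proof (rule inj_onI)
    fix x y assume "x \<in> set (filter (\<lambda>v. ?f v \<noteq> []) (g_verts G))" "y \<in> set (filter (\<lambda>v. ?f v \<noteq> []) (g_verts G))" "?f x = ?f y"
    then obtain j where "j \<in> set (filter (\<lambda>j. incident G j x) (g_edges G))"
      by (cases "filter (\<lambda>j. incident G j x) (g_edges G)") auto
    then have "(j, x) \<in> set (?f x)" by auto
    then have "(j, x) \<in> set (?f y)" using \<open>?f x = ?f y\<close> by simp
    then show "x = y" by auto
  qed
  then show "distinct (removeAll [] (map ?f (g_verts G)))"
    unfolding e using wfD(2)[OF assms] by (simp add: distinct_map)
  show "\<And>ys. ys \<in> set (map ?f (g_verts G)) \<Longrightarrow> distinct ys"
    using wfD(1)[OF assms] by (auto simp: distinct_map inj_on_def)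
  show "\<And>ys zs. ys \<in> set (map ?f (g_verts G)) \<and> zs \<in> set (map ?f (g_verts G)) \<and> ys \<noteq> zs \<Longrightarrow> set ys \<inter> set zs = {}"
    by auto
qed

lemma length_flabels:
  assumes "wf_graph G" shows "length (flabels G) = NN G"
  using distinct_card[OF distinct_flabels[OF assms]] distinct_card[OF distinct_glabels[OF assms]]
    set_flabels[OF assms] set_glabels unfolding NN_def by metis

lemma set_fl_gl: "wf_graph G \<Longrightarrow> set (flabels G) = set (glabels G)"
  using set_flabels set_glabels by metis

lemma mv_vecs[simp]: "mv n M f \<in> vecs n"
  unfolding mv_def vecs_def by auto

lemma mv_mm: "mv n (mm n A B) f = mv n A (mv n B f)"
proof (rule ext)
  fix k
  show "mv n (mm n A B) f k = mv n A (mv n B f) k"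
    unfolding mv_def mm_def
    by (auto simp: sum_distrib_left sum_distrib_right mult.assoc intro: sum.swap)
qed

lemma mv_idm: "f \<in> vecs n \<Longrightarrow> mv n idm f = f"
proof (rule ext)
  fix k assume "f \<in> vecs n"
  show "mv n idm f k = f k"
  proof (cases "k < n")
    case True
    have "(\<Sum>l<n. idm k l * f l) = (\<Sum>l<n. (if l = k then f k else 0))"
      by (rule sum.cong) (auto simp: idm_def)
    also have "\<dots> = f k" using True by simp
    finally show ?thesis using True unfolding mv_def by simp
  qed (use \<open>f \<in> vecs n\<close> in \<open>auto simp: mv_def vecs_def\<close>)
qed

lemma mv_meq: "meq n M1 M2 \<Longrightarrow> mv n M1 f = mv n M2 f"
  unfolding meq_def mv_def by (auto intro!: ext sum.cong)

lemma sum_unique_index: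
  assumes "distinct xs" "x \<in> set xs"
  shows "(\<Sum>r<length xs. if xs ! r = x then (1::complex) else 0) = 1"
proof -
  obtain r0 where r0: "r0 < length xs" "xs ! r0 = x" using assms(2) by (auto simp: in_set_conv_nth)
  have "(\<Sum>r<length xs. if xs ! r = x then (1::complex) else 0) = (\<Sum>r<length xs. if r = r0 then 1 else 0)"
    by (rule sum.cong) (use r0 assms(1) in \<open>auto simp: nth_eq_iff_index_eq\<close>)
  also have "\<dots> = 1" using r0 by simp
  finally show ?thesis .
qed

lemma Wm_Winv: assumes "wf_graph G" shows "meq (NN G) (mm (NN G) (Wm G) (Winv G)) idm"
  unfolding meq_def
proof (intro allI impI)
  fix k l assume k: "k < NN G" and l: "l < NN G"
  let ?gl = "glabels G" and ?fl = "flabels G"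
  have dg: "distinct ?gl" and df: "distinct ?fl" and lf: "length ?fl = NN G"
    using distinct_glabels distinct_flabels length_flabels assms by auto
  have lg: "length ?gl = NN G" unfolding NN_def by simp
  have "mm (NN G) (Wm G) (Winv G) k l = (\<Sum>r<NN G. if ?gl ! r = ?fl ! k \<and> ?fl ! k = ?fl ! l then 1 else 0)"
    unfolding mm_def Wm_def Winv_def by (rule sum.cong) (use k l in auto)
  also have "\<dots> = idm k l"
  proof (cases "k = l")
    case True
    have "?fl ! k \<in> set ?gl" using set_fl_gl[OF assms] k lf by (metis nth_mem)
    then show ?thesis using sum_unique_index[OF dg, of "?fl ! k"] True lg by (simp add: idm_def)
  next
    case False
    then have "?fl ! k \<noteq> ?fl ! l" using df k l lf by (simp add: nth_eq_iff_index_eq)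
    then show ?thesis using False by (simp add: idm_def)
  qed
  finally show "mm (NN G) (Wm G) (Winv G) k l = idm k l" .
qed

lemma Winv_Wm: assumes "wf_graph G" shows "meq (NN G) (mm (NN G) (Winv G) (Wm G)) idm"
  unfolding meq_def
proof (intro allI impI)
  fix k l assume k: "k < NN G" and l: "l < NN G"
  let ?gl = "glabels G" and ?fl = "flabels G"
  have dg: "distinct ?gl" and df: "distinct ?fl" and lf: "length ?fl = NN G"
    using distinct_glabels distinct_flabels length_flabels assms by auto
  have lg: "length ?gl = NN G" unfolding NN_def by simp
  have "mm (NN G) (Winv G) (Wm G) k l = (\<Sum>r<NN G. if ?fl ! r = ?gl ! k \<and> ?gl ! k = ?gl ! l then 1 else 0)"
    unfolding mm_def Wm_def Winv_def by (rule sum.cong) (use k l in auto)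
  also have "\<dots> = idm k l"
  proof (cases "k = l")
    case True
    have "?gl ! k \<in> set ?fl" using set_fl_gl[OF assms] k lg by (metis nth_mem)
    then show ?thesis using sum_unique_index[OF df, of "?gl ! k"] True lf by (simp add: idm_def)
  next
    case False
    then have "?gl ! k \<noteq> ?gl ! l" using dg k l lg by (simp add: nth_eq_iff_index_eq)
    then show ?thesis using False by (simp add: idm_def)
  qed
  finally show "mm (NN G) (Winv G) (Wm G) k l = idm k l" .
qed

lemma W_Winv_apply: "wf_graph G \<Longrightarrow> f \<in> vecs (NN G) \<Longrightarrow> mv (NN G) (Wm G) (mv (NN G) (Winv G) f) = f"
  by (metis Wm_Winv mv_idm mv_meq mv_mm)

lemma Winv_W_apply: "wf_graph G \<Longrightarrow> f \<in> vecs (NN G) \<Longrightarrow> mv (NN G) (Winv G) (mv (NN G) (Wm G) f) = f"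
  by (metis Winv_Wm mv_idm mv_meq mv_mm)

lemma Vt_diag:
  assumes "wf_graph G" "k < NN G"
  shows "Vt G k k * Vt G k k = -1 \<and> cnj (Vt G k k) = - Vt G k k"
proof -
  obtain j v where jv: "glabels G ! k = (j, v)" by fastforce
  have "(j, v) \<in> set (glabels G)" using jv assms(2) unfolding NN_def by (metis nth_mem)
  then have j: "j \<in> JJ G" by (simp add: set_glabels)
  show ?thesis
  proof (cases "j \<in> g_int G")
    case True then show ?thesis using assms(2) jv by (auto simp: Vt_def)
  next
    case False
    then have "j \<in> EE G" using j by (simp add: EE_def)
    then have "g_rho G j = -1 \<or> g_rho G j = 1" using wfD(5)[OF assms(1)] by blast
    then show ?thesis using False assms(2) jv by (auto simp: Vt_def)
  qed
qed

lemma VC_apply: "VC G w k = (if k < NN G then Vt G k k * cnj (w k) else 0)"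
proof (cases "k < NN G")
  case True
  have "(\<Sum>l<NN G. Vt G k l * cnj (w l)) = (\<Sum>l<NN G. if l = k then Vt G k k * cnj (w k) else 0)"
    by (rule sum.cong) (auto simp: Vt_def)
  then show ?thesis using True by (simp add: VC_def mv_def)
qed (simp add: VC_def mv_def)

lemma VC_vecs[simp]: "VC G w \<in> vecs (NN G)"
  unfolding VC_def by simp

lemma VC_VC: assumes "wf_graph G" "w \<in> vecs (NN G)" shows "VC G (VC G w) = w"
proof (rule ext)
  fix k show "VC G (VC G w) k = w k"
  proof (cases "k < NN G")
    case True
    have "Vt G k k * cnj (Vt G k k * cnj (w k)) = - (Vt G k k * Vt G k k) * w k"
      using conjunct2[OF Vt_diag[OF assms(1) True]] by (simp add: mult.assoc)
    also have "\<dots> = w k" using Vt_diag[OF assms(1) True] by simp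
    finally show ?thesis using True by (simp add: VC_apply)
  qed (use assms(2) in \<open>auto simp: VC_apply vecs_def\<close>)
qed

lemma VC_inj: "wf_graph G \<Longrightarrow> w \<in> vecs (NN G) \<Longrightarrow> w' \<in> vecs (NN G) \<Longrightarrow> VC G w = VC G w' \<Longrightarrow> w = w'"
  by (metis VC_VC)

lemma VC_neg: "VC G (\<lambda>k. - w k) = (\<lambda>k. - VC G w k)"
  by (rule ext) (simp add: VC_apply)



section \<open>Local integrability and boundary limits\<close>

lemma cnj_measurable:
  "u \<in> borel_measurable M \<Longrightarrow> (\<lambda>t. cnj (u t)) \<in> borel_measurable M"
  by (rule borel_measurable_continuous_on[OF continuous_on_cnj[OF continuous_on_id]])

lemma L2on_loc_abs_int:
  assumes L: "L2on S g" and S: "S \<in> sets lebesgue" and T: "T \<in> lmeasurable" "T \<subseteq> S"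
  shows "g absolutely_integrable_on T"
proof -
  let ?h = "\<lambda>t. (cmod (g t))\<^sup>2"
  have "integrable (lebesgue_on S) ?h" using L unfolding L2on_def by blast
  then have "set_integrable lebesgue S ?h"
    unfolding set_integrable_def using S by (simp add: integrable_restrict_space)
  then have "set_integrable lebesgue T ?h"
    by (rule set_integrable_subset) (use T in auto)
  then have hi: "?h integrable_on T" using absolutely_integrable_on_def by blast
  have c: "(\<lambda>t. 1::real) integrable_on T" using T by (simp add: integrable_on_const)
  have "(\<lambda>t. 1 + ?h t) integrable_on T" using integrable_add[OF c hi] by simp
  moreover have gm: "g \<in> borel_measurable (lebesgue_on T)"
  proof -
    have "g \<in> borel_measurable (lebesgue_on S)" using L unfolding L2on_def by blast
    then show ?thesis using T(2) by (rule measurable_restrict_mono)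
  qed
  moreover have "norm (g t) \<le> 1 + ?h t" for t
  proof -
    have "0 \<le> (cmod (g t) - 1)\<^sup>2" by simp
    then have "2 * cmod (g t) \<le> (cmod (g t))\<^sup>2 + 1" by (simp add: power2_diff)
    then have "cmod (g t) \<le> 1 + (cmod (g t))\<^sup>2" using norm_ge_zero[of "g t"] by linarith
    then show ?thesis by simp
  qed
  ultimately show ?thesis
    using T by (intro measurable_bounded_by_integrable_imp_absolutely_integrable[of g T]) auto
qed

lemma L2on_int:
  assumes L: "L2on S g" and S: "S \<in> sets lebesgue" and "{a<..<c} \<subseteq> S"
  shows "g integrable_on {a..c}"
proof -
  have "g absolutely_integrable_on {a<..<c}"
    by (rule L2on_loc_abs_int[OF L S]) (use assms in auto)
  then have i: "g integrable_on {a<..<c}" using absolutely_integrable_on_def by blast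
  show ?thesis
  proof (cases "a \<le> c")
    case True
    then have "{a..c} = insert a (insert c {a<..<c})" by auto
    then show ?thesis using i integrable_on_insert_iff by metis
  qed auto
qed

lemma isderiv_lim_right:
  assumes D: "isderiv S u g" and S: "S \<in> sets lebesgue" and ac: "a < c" and sub: "{a<..c} \<subseteq> S"
  shows "\<exists>L. (u \<longlongrightarrow> L) (at_right a)"
proof -
  have sub': "{a<..<c} \<subseteq> S" using sub by auto
  have Lg: "L2on S g" using D unfolding isderiv_def by blast
  have gi: "g integrable_on {a..c}" by (rule L2on_int[OF Lg S sub'])
  let ?F = "\<lambda>x. integral {x..c} g"
  have "continuous_on {a..c} ?F" by (rule indefinite_integral_continuous_1'[OF gi])
  then have F: "(?F \<longlongrightarrow> ?F a) (at_right a)" using continuous_on_Icc_at_rightD ac by blast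
  have "\<forall>\<^sub>F x in at_right a. u c - ?F x = u x"
  proof (rule eventually_mono[OF eventually_at_right_real[OF ac]])
    fix x assume x: "x \<in> {a<..<c}"
    then have "x \<in> S" "c \<in> S" using sub ac by auto
    then have "(g has_integral (u c - u x)) {x..c}" using D x unfolding isderiv_def by auto
    then show "u c - ?F x = u x" by (simp add: integral_unique)
  qed
  moreover have "((\<lambda>x. u c - ?F x) \<longlongrightarrow> u c - ?F a) (at_right a)"
    by (intro tendsto_intros F)
  ultimately show ?thesis using Lim_transform_eventually by blast
qed

lemma isderiv_lim_left:
  assumes D: "isderiv S u g" and S: "S \<in> sets lebesgue" and cb: "c < b" and sub: "{c..<b} \<subseteq> S"
  shows "\<exists>L. (u \<longlongrightarrow> L) (at_left b)"
proof -
  have sub': "{c<..<b} \<subseteq> S" using sub by auto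
  have Lg: "L2on S g" using D unfolding isderiv_def by blast
  have gi: "g integrable_on {c..b}" by (rule L2on_int[OF Lg S sub'])
  let ?F = "\<lambda>x. integral {c..x} g"
  have "continuous_on {c..b} ?F" by (rule indefinite_integral_continuous_1[OF gi])
  then have F: "(?F \<longlongrightarrow> ?F b) (at_left b)" using continuous_on_Icc_at_leftD cb by blast
  have "\<forall>\<^sub>F x in at_left b. u c + ?F x = u x"
  proof (rule eventually_mono[OF eventually_at_left_real[OF cb]])
    fix x assume x: "x \<in> {c<..<b}"
    then have "x \<in> S" "c \<in> S" using sub cb by auto
    then have "(g has_integral (u x - u c)) {c..x}" using D x unfolding isderiv_def by auto
    then show "u c + ?F x = u x" by (simp add: integral_unique)
  qed
  moreover have "((\<lambda>x. u c + ?F x) \<longlongrightarrow> u c + ?F b) (at_left b)"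
    by (intro tendsto_intros F)
  ultimately show ?thesis using Lim_transform_eventually by blast
qed

lemma Ij_sets: "Ij G j \<in> sets lebesgue"
  unfolding Ij_def by auto

lemma isderiv_limits:
  assumes wf: "wf_graph G" and j: "j \<in> JJ G" and D: "isderiv (Ij G j) u g"
  shows "(j \<in> g_int G \<or> g_rho G j = -1 \<longrightarrow> (\<exists>L. (u \<longlongrightarrow> L) (at_right (g_a G j))))
       \<and> (j \<in> g_int G \<or> g_rho G j \<noteq> -1 \<longrightarrow> (\<exists>L. (u \<longlongrightarrow> L) (at_left (g_b G j))))"
proof (cases "j \<in> g_int G")
  case True
  define a where "a = g_a G j"
  define b where "b = g_b G j"
  have ab: "a < b" using wfD(4)[OF wf True] unfolding a_def b_def by blast
  have I: "Ij G j = {a<..<b}" using True by (simp add: Ij_def a_def b_def)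
  have s1: "{a<..(a+b)/2} \<subseteq> Ij G j" unfolding I using ab by auto
  have s2: "{(a+b)/2..<b} \<subseteq> Ij G j" unfolding I using ab by auto
  have "\<exists>L. (u \<longlongrightarrow> L) (at_right a)"
    by (rule isderiv_lim_right[OF D Ij_sets _ s1]) (use ab in simp)
  moreover have "\<exists>L. (u \<longlongrightarrow> L) (at_left b)"
    by (rule isderiv_lim_left[OF D Ij_sets _ s2]) (use ab in simp)
  ultimately have "(\<exists>L. (u \<longlongrightarrow> L) (at_right (g_a G j))) \<and> (\<exists>L. (u \<longlongrightarrow> L) (at_left (g_b G j)))"
    by (simp only: a_def b_def)
  then show ?thesis by blast
next
  case False
  show ?thesis
  proof (cases "g_rho G j = -1")
    case True
    define a where "a = g_a G j"
    have I: "Ij G j = {a<..}" using True False by (simp add: Ij_def a_def)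
    have s1: "{a<..a+1} \<subseteq> Ij G j" unfolding I by auto
    have "\<exists>L. (u \<longlongrightarrow> L) (at_right a)"
      by (rule isderiv_lim_right[OF D Ij_sets _ s1]) simp
    then have "\<exists>L. (u \<longlongrightarrow> L) (at_right (g_a G j))" by (simp only: a_def)
    with True False show ?thesis by blast
  next
    case F2: False
    define b where "b = g_b G j"
    have I: "Ij G j = {..<b}" using F2 False by (simp add: Ij_def b_def)
    have s2: "{b-1..<b} \<subseteq> Ij G j" unfolding I by auto
    have "\<exists>L. (u \<longlongrightarrow> L) (at_left b)"
      by (rule isderiv_lim_left[OF D Ij_sets _ s2]) simp
    then have "\<exists>L. (u \<longlongrightarrow> L) (at_left (g_b G j))" by (simp only: b_def)
    with F2 False show ?thesis by blast
  qed
qed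

lemma bl_cnj: "\<exists>L. (u \<longlongrightarrow> L) (at_right a) \<Longrightarrow> bl a (\<lambda>t. cnj (u t)) = cnj (bl a u)"
  unfolding bl_def by (metis tendsto_Lim tendsto_cnj trivial_limit_at_right_real)

lemma br_cnj: "\<exists>L. (u \<longlongrightarrow> L) (at_left a) \<Longrightarrow> br a (\<lambda>t. cnj (u t)) = cnj (br a u)"
  unfolding br_def by (metis tendsto_Lim tendsto_cnj trivial_limit_at_left_real)

lemma bl_neg: "\<exists>L. (u \<longlongrightarrow> L) (at_right a) \<Longrightarrow> bl a (\<lambda>t. - u t) = - bl a u"
  unfolding bl_def by (metis tendsto_Lim tendsto_minus trivial_limit_at_right_real)

lemma br_neg: "\<exists>L. (u \<longlongrightarrow> L) (at_left a) \<Longrightarrow> br a (\<lambda>t. - u t) = - br a u"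
  unfolding br_def by (metis tendsto_Lim tendsto_minus trivial_limit_at_left_real)

lemma gl_edge:
  assumes "wf_graph G" "k < NN G" "glabels G ! k = (j, v)"
  shows "j \<in> JJ G" "j \<notin> g_int G \<Longrightarrow> g_rho G j = -1 \<or> g_rho G j = 1"
    "j \<in> g_int G \<Longrightarrow> g_ini G j \<noteq> g_ter G j"
proof -
  have "(j, v) \<in> set (glabels G)" using assms unfolding NN_def by (metis nth_mem)
  then show j: "j \<in> JJ G" by (simp add: set_glabels)
  show "j \<notin> g_int G \<Longrightarrow> g_rho G j = -1 \<or> g_rho G j = 1"
    using wfD(5)[OF assms(1)] j by (auto simp: EE_def)
  show "j \<in> g_int G \<Longrightarrow> g_ini G j \<noteq> g_ter G j" using wfD(4)[OF assms(1)] by blast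
qed

lemma gam1_Cop:
  assumes wf: "wf_graph G" and H: "\<forall>j\<in>JJ G. \<exists>g. isderiv (Ij G j) (\<lambda>t. snd (Phi j t)) g"
  shows "gam1 G (Cop Phi) = VC G (gam2 G Phi)"
proof (rule ext)
  fix k
  show "gam1 G (Cop Phi) k = VC G (gam2 G Phi) k"
  proof (cases "k < NN G")
    case True
    obtain j v where jv: "glabels G ! k = (j, v)" by fastforce
    note e = gl_edge[OF wf True jv]
    obtain g where "isderiv (Ij G j) (\<lambda>t. snd (Phi j t)) g" using H e(1) by blast
    note lim = isderiv_limits[OF wf e(1) this]
    have L1: "j \<in> g_int G \<or> g_rho G j = -1 \<Longrightarrow> bl (g_a G j) (\<lambda>t. cnj (snd (Phi j t))) = cnj (bl (g_a G j) (\<lambda>t. snd (Phi j t)))"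
      using lim bl_cnj by blast
    have L2: "j \<in> g_int G \<or> g_rho G j \<noteq> -1 \<Longrightarrow> br (g_b G j) (\<lambda>t. cnj (snd (Phi j t))) = cnj (br (g_b G j) (\<lambda>t. snd (Phi j t)))"
      using lim br_cnj by blast
    show ?thesis
    proof (cases "j \<in> g_int G")
      case True
      then show ?thesis using \<open>k < NN G\<close> jv L1 L2
        by (auto simp: gam1_def gam2_def VC_apply Vt_def Cop_def)
    next
      case False
      then have "g_rho G j = -1 \<or> g_rho G j = 1" using e by blast
      then show ?thesis using \<open>k < NN G\<close> jv False L1 L2
        by (auto simp: gam1_def gam2_def VC_apply Vt_def Cop_def bdry_def)
    qed
  qed (simp add: gam1_def VC_apply)
qed

lemma gam2_Cop:
  assumes wf: "wf_graph G" and H: "\<forall>j\<in>JJ G. \<exists>g. isderiv (Ij G j) (\<lambda>t. fst (Phi j t)) g"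
  shows "gam2 G (Cop Phi) = VC G (gam1 G Phi)"
proof (rule ext)
  fix k
  show "gam2 G (Cop Phi) k = VC G (gam1 G Phi) k"
  proof (cases "k < NN G")
    case True
    obtain j v where jv: "glabels G ! k = (j, v)" by fastforce
    note e = gl_edge[OF wf True jv]
    obtain g where "isderiv (Ij G j) (\<lambda>t. fst (Phi j t)) g" using H e(1) by blast
    note lim = isderiv_limits[OF wf e(1) this]
    have L1: "j \<in> g_int G \<or> g_rho G j = -1 \<Longrightarrow> bl (g_a G j) (\<lambda>t. cnj (fst (Phi j t))) = cnj (bl (g_a G j) (\<lambda>t. fst (Phi j t)))"
      using lim bl_cnj by blast
    have L2: "j \<in> g_int G \<or> g_rho G j \<noteq> -1 \<Longrightarrow> br (g_b G j) (\<lambda>t. cnj (fst (Phi j t))) = cnj (br (g_b G j) (\<lambda>t. fst (Phi j t)))"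
      using lim br_cnj by blast
    show ?thesis
    proof (cases "j \<in> g_int G")
      case True
      then show ?thesis using \<open>k < NN G\<close> jv L1 L2
        by (auto simp: gam1_def gam2_def VC_apply Vt_def Cop_def)
    next
      case False
      then have "g_rho G j = -1 \<or> g_rho G j = 1" using e by blast
      then show ?thesis using \<open>k < NN G\<close> jv False L1 L2
        by (auto simp: gam1_def gam2_def VC_apply Vt_def Cop_def bdry_def)
    qed
  qed (simp add: gam2_def VC_apply)
qed

lemma gam1_fneg:
  assumes wf: "wf_graph G" and H: "\<forall>j\<in>JJ G. \<exists>g. isderiv (Ij G j) (\<lambda>t. fst (Phi j t)) g"
  shows "gam1 G (fneg Phi) = (\<lambda>k. - gam1 G Phi k)"
proof (rule ext)
  fix k
  show "gam1 G (fneg Phi) k = - gam1 G Phi k"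
  proof (cases "k < NN G")
    case True
    obtain j v where jv: "glabels G ! k = (j, v)" by fastforce
    note e = gl_edge[OF wf True jv]
    obtain g where "isderiv (Ij G j) (\<lambda>t. fst (Phi j t)) g" using H e(1) by blast
    note lim = isderiv_limits[OF wf e(1) this]
    have L1: "j \<in> g_int G \<or> g_rho G j = -1 \<Longrightarrow> bl (g_a G j) (\<lambda>t. - (fst (Phi j t))) = - (bl (g_a G j) (\<lambda>t. fst (Phi j t)))"
      using lim bl_neg by blast
    have L2: "j \<in> g_int G \<or> g_rho G j \<noteq> -1 \<Longrightarrow> br (g_b G j) (\<lambda>t. - (fst (Phi j t))) = - (br (g_b G j) (\<lambda>t. fst (Phi j t)))"
      using lim br_neg by blast
    show ?thesis
      using \<open>k < NN G\<close> jv L1 L2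
      by (auto simp: gam1_def fneg_def bdry_def Let_def)
  qed (simp add: gam1_def)
qed

lemma gam2_fneg:
  assumes wf: "wf_graph G" and H: "\<forall>j\<in>JJ G. \<exists>g. isderiv (Ij G j) (\<lambda>t. snd (Phi j t)) g"
  shows "gam2 G (fneg Phi) = (\<lambda>k. - gam2 G Phi k)"
proof (rule ext)
  fix k
  show "gam2 G (fneg Phi) k = - gam2 G Phi k"
  proof (cases "k < NN G")
    case True
    obtain j v where jv: "glabels G ! k = (j, v)" by fastforce
    note e = gl_edge[OF wf True jv]
    obtain g where "isderiv (Ij G j) (\<lambda>t. snd (Phi j t)) g" using H e(1) by blast
    note lim = isderiv_limits[OF wf e(1) this]
    have L1: "j \<in> g_int G \<or> g_rho G j = -1 \<Longrightarrow> bl (g_a G j) (\<lambda>t. - (snd (Phi j t))) = - (bl (g_a G j) (\<lambda>t. snd (Phi j t)))"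
      using lim bl_neg by blast
    have L2: "j \<in> g_int G \<or> g_rho G j \<noteq> -1 \<Longrightarrow> br (g_b G j) (\<lambda>t. - (snd (Phi j t))) = - (br (g_b G j) (\<lambda>t. snd (Phi j t)))"
      using lim br_neg by blast
    show ?thesis
      using \<open>k < NN G\<close> jv L1 L2
      by (auto simp: gam2_def fneg_def bdry_def Let_def)
  qed (simp add: gam2_def)
qed

section \<open>Closure of D^max under C and negation\<close>

lemma L2on_cnj: "L2on S u \<Longrightarrow> L2on S (\<lambda>t. cnj (u t))"
  unfolding L2on_def using cnj_measurable by auto

lemma L2on_neg: "L2on S u \<Longrightarrow> L2on S (\<lambda>t. - u t)"
  unfolding L2on_def by auto

lemma isderiv_cnj: "isderiv S u g \<Longrightarrow> isderiv S (\<lambda>t. cnj (u t)) (\<lambda>t. cnj (g t))"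
  unfolding isderiv_def using L2on_cnj has_integral_cnj[of g, unfolded o_def]
  by (metis complex_cnj_diff)

lemma isderiv_neg: "isderiv S u g \<Longrightarrow> isderiv S (\<lambda>t. - u t) (\<lambda>t. - g t)"
  unfolding isderiv_def using L2on_neg has_integral_neg
  by (metis minus_diff_minus)

lemma Hsp_Cop: "Phi \<in> Hsp G \<Longrightarrow> Cop Phi \<in> Hsp G"
  unfolding Hsp_def Cop_def by (auto intro: L2on_cnj)

lemma Hsp_fneg: "Phi \<in> Hsp G \<Longrightarrow> fneg Phi \<in> Hsp G"
  unfolding Hsp_def fneg_def by (auto intro: L2on_neg)

lemma nrm_Cop: "nrm G (Cop Phi) = nrm G Phi"
  unfolding nrm_def Cop_def by (simp add: add.commute)

lemma nrm_fneg: "nrm G (fneg Phi) = nrm G Phi"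
  unfolding nrm_def fneg_def by simp

lemma Cop_Cop[simp]: "Cop (Cop Phi) = Phi"
  unfolding Cop_def by simp

lemma fneg_fneg[simp]: "fneg (fneg Phi) = Phi"
  unfolding fneg_def by simp

lemma Cop_fneg: "Cop (fneg Phi) = fneg (Cop Phi)"
  unfolding Cop_def fneg_def by simp

lemma Dmax_I:
  assumes "Phi \<in> Hsp G" "Psi \<in> Hsp G"
    "\<forall>j\<in>JJ G. isderiv (Ij G j) (\<lambda>t. fst (Phi j t)) (\<lambda>t. fst (Phi' j t))
                      \<and> isderiv (Ij G j) (\<lambda>t. snd (Phi j t)) (\<lambda>t. snd (Phi' j t))"
    "nrm G (fsub Psi (\<lambda>j t. (- \<i> * snd (Phi' j t) + complex_of_real m * fst (Phi j t),
                                   - \<i> * fst (Phi' j t) - complex_of_real m * snd (Phi j t)))) = 0"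
  shows "(Phi, Psi) \<in> Dmax G m"
  unfolding Dmax_def using assms by blast

lemma Dmax_Cop:
  assumes "(Phi, Psi) \<in> Dmax G m"
  shows "(Cop Phi, fneg (Cop Psi)) \<in> Dmax G m"
proof -
  obtain Phi' where d: "\<forall>j\<in>JJ G. isderiv (Ij G j) (\<lambda>t. fst (Phi j t)) (\<lambda>t. fst (Phi' j t))
                      \<and> isderiv (Ij G j) (\<lambda>t. snd (Phi j t)) (\<lambda>t. snd (Phi' j t))"
    and n: "nrm G (fsub Psi (\<lambda>j t. (- \<i> * snd (Phi' j t) + complex_of_real m * fst (Phi j t),
                                   - \<i> * fst (Phi' j t) - complex_of_real m * snd (Phi j t)))) = 0"
    and H: "Phi \<in> Hsp G" "Psi \<in> Hsp G"
    using assms unfolding Dmax_def by blast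
  have d': "\<forall>j\<in>JJ G. isderiv (Ij G j) (\<lambda>t. fst (Cop Phi j t)) (\<lambda>t. fst (Cop Phi' j t))
                      \<and> isderiv (Ij G j) (\<lambda>t. snd (Cop Phi j t)) (\<lambda>t. snd (Cop Phi' j t))"
    using d unfolding Cop_def by (auto intro: isderiv_cnj)
  have e: "fsub (fneg (Cop Psi)) (\<lambda>j t. (- \<i> * snd (Cop Phi' j t) + complex_of_real m * fst (Cop Phi j t),
                                   - \<i> * fst (Cop Phi' j t) - complex_of_real m * snd (Cop Phi j t)))
     = fneg (Cop (fsub Psi (\<lambda>j t. (- \<i> * snd (Phi' j t) + complex_of_real m * fst (Phi j t),
                                   - \<i> * fst (Phi' j t) - complex_of_real m * snd (Phi j t)))))"
    unfolding fsub_def fneg_def Cop_def by (auto intro!: ext simp: algebra_simps)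
  have n': "nrm G (fsub (fneg (Cop Psi)) (\<lambda>j t. (- \<i> * snd (Cop Phi' j t) + complex_of_real m * fst (Cop Phi j t),
                                   - \<i> * fst (Cop Phi' j t) - complex_of_real m * snd (Cop Phi j t)))) = 0"
    by (simp only: e nrm_fneg nrm_Cop n)
  have H': "Cop Phi \<in> Hsp G" "fneg (Cop Psi) \<in> Hsp G" using H Hsp_Cop Hsp_fneg by auto
  show ?thesis
    by (rule Dmax_I[OF H' d' n'])
qed

lemma Dmax_fneg:
  assumes "(Phi, Psi) \<in> Dmax G m"
  shows "(fneg Phi, fneg Psi) \<in> Dmax G m"
proof -
  obtain Phi' where d: "\<forall>j\<in>JJ G. isderiv (Ij G j) (\<lambda>t. fst (Phi j t)) (\<lambda>t. fst (Phi' j t))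
                      \<and> isderiv (Ij G j) (\<lambda>t. snd (Phi j t)) (\<lambda>t. snd (Phi' j t))"
    and n: "nrm G (fsub Psi (\<lambda>j t. (- \<i> * snd (Phi' j t) + complex_of_real m * fst (Phi j t),
                                   - \<i> * fst (Phi' j t) - complex_of_real m * snd (Phi j t)))) = 0"
    and H: "Phi \<in> Hsp G" "Psi \<in> Hsp G"
    using assms unfolding Dmax_def by blast
  have d': "\<forall>j\<in>JJ G. isderiv (Ij G j) (\<lambda>t. fst (fneg Phi j t)) (\<lambda>t. fst (fneg Phi' j t))
                      \<and> isderiv (Ij G j) (\<lambda>t. snd (fneg Phi j t)) (\<lambda>t. snd (fneg Phi' j t))"
    using d unfolding fneg_def by (auto intro: isderiv_neg)
  have e: "fsub (fneg Psi) (\<lambda>j t. (- \<i> * snd (fneg Phi' j t) + complex_of_real m * fst (fneg Phi j t),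
                                   - \<i> * fst (fneg Phi' j t) - complex_of_real m * snd (fneg Phi j t)))
     = fneg (fsub Psi (\<lambda>j t. (- \<i> * snd (Phi' j t) + complex_of_real m * fst (Phi j t),
                                   - \<i> * fst (Phi' j t) - complex_of_real m * snd (Phi j t))))"
    unfolding fsub_def fneg_def by (auto intro!: ext simp: algebra_simps)
  have n': "nrm G (fsub (fneg Psi) (\<lambda>j t. (- \<i> * snd (fneg Phi' j t) + complex_of_real m * fst (fneg Phi j t),
                                   - \<i> * fst (fneg Phi' j t) - complex_of_real m * snd (fneg Phi j t)))) = 0"
    by (simp only: e nrm_fneg n)
  have H': "fneg Phi \<in> Hsp G" "fneg Psi \<in> Hsp G" using H Hsp_fneg by auto
  show ?thesis
    by (rule Dmax_I[OF H' d' n'])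
qed

lemma Dmax_isderiv:
  assumes "(Phi, Psi) \<in> Dmax G m"
  shows "\<forall>j\<in>JJ G. \<exists>g. isderiv (Ij G j) (\<lambda>t. fst (Phi j t)) g"
        "\<forall>j\<in>JJ G. \<exists>g. isderiv (Ij G j) (\<lambda>t. snd (Phi j t)) g"
  using assms unfolding Dmax_def by blast+



section \<open>Abstract spectral transport\<close>

definition Tpair :: "('j fn \<times> 'j fn) set \<Rightarrow> ('j fn \<times> 'j fn) set \<Rightarrow> bool" where
  "Tpair D D' \<longleftrightarrow> (\<forall>Phi Psi. (Phi, Psi) \<in> D \<longleftrightarrow> (Cop Phi, fneg (Cop Psi)) \<in> D')"

definition negcl :: "('j fn \<times> 'j fn) set \<Rightarrow> bool" where
  "negcl D \<longleftrightarrow> (\<forall>Phi Psi. (Phi, Psi) \<in> D \<longrightarrow> (fneg Phi, fneg Psi) \<in> D)"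

definition GP :: "('j fn \<times> 'j fn) set \<Rightarrow> ('j fn \<times> 'j fn) set \<Rightarrow> bool" where
  "GP D D' \<longleftrightarrow> Tpair D D' \<and> negcl D \<and> negcl D'"

lemma Tpair_sym: "Tpair D D' \<Longrightarrow> Tpair D' D"
  unfolding Tpair_def by (metis Cop_Cop Cop_fneg fneg_fneg)

lemma GP_sym: "GP D D' \<Longrightarrow> GP D' D"
  unfolding GP_def using Tpair_sym by blast

lemma GP_T: "GP D D' \<Longrightarrow> (Phi, Psi) \<in> D \<Longrightarrow> (Cop Phi, fneg (Cop Psi)) \<in> D'"
  unfolding GP_def Tpair_def by blast

lemma GP_T': "GP D D' \<Longrightarrow> (Phi, Psi) \<in> D' \<Longrightarrow> (Cop Phi, fneg (Cop Psi)) \<in> D"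
  using GP_T GP_sym by blast

lemma I1: "fsub (fneg (Cop Psi)) (fscale (- cnj z) (Cop Phi)) = fneg (Cop (fsub Psi (fscale z Phi)))"
  unfolding fsub_def fneg_def Cop_def fscale_def by (auto intro!: ext simp: algebra_simps)

lemma I2: "fsub g (fneg (Cop X)) = fneg (Cop (fsub (fneg (Cop g)) X))"
  unfolding fsub_def fneg_def Cop_def by (auto intro!: ext simp: algebra_simps)

lemma I3: "fsub (fsub (fneg (Cop Psi)) (fscale (- cnj z) (Cop Phi))) (fneg (Cop P))
   = fneg (Cop (fsub (fsub Psi (fscale z Phi)) P))"
  unfolding fsub_def fneg_def Cop_def fscale_def by (auto intro!: ext simp: algebra_simps)

lemma I4: "fsub (fsub (Cop Psi) (fscale (- cnj z) (fneg (Cop Phi)))) (Cop P)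
   = Cop (fsub (fsub Psi (fscale z Phi)) P)"
  unfolding fsub_def fneg_def Cop_def fscale_def by (auto intro!: ext simp: algebra_simps)

lemma Cop_lincomb: "Cop (lincomb fs c) = lincomb (map Cop fs) (\<lambda>k. cnj (c k))"
  unfolding lincomb_def Cop_def by (auto intro!: ext sum.cong)

lemma I5: "Cop (fsub (Cop P) (lincomb fs c)) = fsub P (lincomb (map Cop fs) (\<lambda>k. cnj (c k)))"
proof -
  have "Cop (fsub (Cop P) Q) = fsub P (Cop Q)" for Q :: "'a fn"
    unfolding fsub_def Cop_def by auto
  then show ?thesis using Cop_lincomb by metis
qed

lemma ccnj[simp]: "- cnj (- cnj (z::complex)) = z" by simp

lemma res_one:
  assumes gp: "GP D D'" and r: "in_resolvent (Hsp G) (nrm G) D lam"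
  shows "in_resolvent (Hsp G) (nrm G) D' (- cnj lam)"
proof -
  from r have r1: "\<forall>(Phi, Psi)\<in>D. nrm G (fsub Psi (fscale lam Phi)) = 0 \<longrightarrow> nrm G Phi = 0"
     and r2: "\<forall>g\<in>Hsp G. \<exists>(Phi, Psi)\<in>D. nrm G (fsub g (fsub Psi (fscale lam Phi))) = 0"
     and r3: "\<exists>c. \<forall>(Phi, Psi)\<in>D. nrm G Phi \<le> c * nrm G (fsub Psi (fscale lam Phi))"
    unfolding in_resolvent_def by blast+
  have e: "nrm G (fsub (fneg (Cop Psi)) (fscale lam (Cop Phi))) = nrm G (fsub Psi (fscale (- cnj lam) Phi))" for Phi Psi :: "'a fn"
    using I1[of Psi "- cnj lam" Phi] by (simp add: nrm_fneg nrm_Cop)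
  have "\<forall>(Phi, Psi)\<in>D'. nrm G (fsub Psi (fscale (- cnj lam) Phi)) = 0 \<longrightarrow> nrm G Phi = 0"
  proof (clarify)
    fix Phi Psi assume "(Phi, Psi) \<in> D'" "nrm G (fsub Psi (fscale (- cnj lam) Phi)) = 0"
    note pp = this
    have T: "(Cop Phi, fneg (Cop Psi)) \<in> D" using GP_T'[OF gp pp(1)] .
    have z: "nrm G (fsub (fneg (Cop Psi)) (fscale lam (Cop Phi))) = 0" using e pp(2) by simp
    have "nrm G (Cop Phi) = 0" using bspec[OF r1 T] z by simp
    then show "nrm G Phi = 0" by (simp add: nrm_Cop)
  qed
  moreover have "\<forall>g\<in>Hsp G. \<exists>(Phi, Psi)\<in>D'. nrm G (fsub g (fsub Psi (fscale (- cnj lam) Phi))) = 0"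
  proof
    fix g assume "g \<in> Hsp G"
    then have "fneg (Cop g) \<in> Hsp G" by (simp add: Hsp_Cop Hsp_fneg)
    then obtain Phi Psi where D: "(Phi, Psi) \<in> D" and n: "nrm G (fsub (fneg (Cop g)) (fsub Psi (fscale lam Phi))) = 0"
      using r2 by blast
    have "nrm G (fsub g (fsub (fneg (Cop Psi)) (fscale (- cnj lam) (Cop Phi)))) = 0"
      using n by (simp add: I1 I2 nrm_fneg nrm_Cop)
    then show "\<exists>(Phi, Psi)\<in>D'. nrm G (fsub g (fsub Psi (fscale (- cnj lam) Phi))) = 0"
      using GP_T[OF gp D] by blast
  qed
  moreover have "\<exists>c. \<forall>(Phi, Psi)\<in>D'. nrm G Phi \<le> c * nrm G (fsub Psi (fscale (- cnj lam) Phi))"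
  proof -
    obtain c where c: "\<forall>(Phi, Psi)\<in>D. nrm G Phi \<le> c * nrm G (fsub Psi (fscale lam Phi))" using r3 by blast
    have "\<forall>(Phi, Psi)\<in>D'. nrm G Phi \<le> c * nrm G (fsub Psi (fscale (- cnj lam) Phi))"
    proof clarify
      fix Phi Psi assume "(Phi, Psi) \<in> D'"
      then have "(Cop Phi, fneg (Cop Psi)) \<in> D" by (rule GP_T'[OF gp])
      then have "nrm G (Cop Phi) \<le> c * nrm G (fsub (fneg (Cop Psi)) (fscale lam (Cop Phi)))"
        using bspec[OF c, of "(Cop Phi, fneg (Cop Psi))"] by simp
      then show "nrm G Phi \<le> c * nrm G (fsub Psi (fscale (- cnj lam) Phi))"
        by (simp add: e nrm_Cop)
    qed
    then show ?thesis by blast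
  qed
  ultimately show ?thesis unfolding in_resolvent_def by blast
qed

lemma res_iff: "GP D D' \<Longrightarrow> in_resolvent (Hsp G) (nrm G) D lam \<longleftrightarrow> in_resolvent (Hsp G) (nrm G) D' (- cnj lam)"
  using res_one[of D D'] res_one[of D' D, OF GP_sym] by (metis ccnj)

lemma spec_iff: "GP D D' \<Longrightarrow> lam \<in> spec (Hsp G) (nrm G) D \<longleftrightarrow> - cnj lam \<in> spec (Hsp G) (nrm G) D'"
  unfolding spec_def using res_iff by blast

lemma specp_one:
  assumes gp: "GP D D'" and "lam \<in> spec_p (Hsp G) (nrm G) D"
  shows "- cnj lam \<in> spec_p (Hsp G) (nrm G) D'"
proof -
  obtain Phi Psi where D: "(Phi, Psi) \<in> D" "nrm G Phi \<noteq> 0" "nrm G (fsub Psi (fscale lam Phi)) = 0"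
    using assms(2) unfolding spec_p_def by blast
  have "nrm G (fsub (fneg (Cop Psi)) (fscale (- cnj lam) (Cop Phi))) = 0"
    using D(3) by (simp add: I1 nrm_fneg nrm_Cop)
  moreover have "nrm G (Cop Phi) \<noteq> 0" using D(2) by (simp add: nrm_Cop)
  ultimately show ?thesis unfolding spec_p_def using GP_T[OF gp D(1)]
    by (intro CollectI bexI[of _ "(Cop Phi, fneg (Cop Psi))"]) simp_all
qed

lemma specp_iff: "GP D D' \<Longrightarrow> lam \<in> spec_p (Hsp G) (nrm G) D \<longleftrightarrow> - cnj lam \<in> spec_p (Hsp G) (nrm G) D'"
  using specp_one[of D D'] specp_one[of D' D, OF GP_sym] by (metis ccnj)

lemma dense_one:
  assumes gp: "GP D D'" and r: "dense_range (Hsp G) (nrm G) D lam"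
  shows "dense_range (Hsp G) (nrm G) D' (- cnj lam)"
  unfolding dense_range_def
proof (intro ballI allI impI)
  fix g and e :: real assume "g \<in> Hsp G" "e > 0"
  then have "fneg (Cop g) \<in> Hsp G" by (simp add: Hsp_Cop Hsp_fneg)
  then obtain Phi Psi where D: "(Phi, Psi) \<in> D" and n: "nrm G (fsub (fneg (Cop g)) (fsub Psi (fscale lam Phi))) < e"
    using r \<open>e > 0\<close> unfolding dense_range_def by blast
  have "nrm G (fsub g (fsub (fneg (Cop Psi)) (fscale (- cnj lam) (Cop Phi)))) < e"
    using n by (simp add: I1 I2 nrm_fneg nrm_Cop)
  then show "\<exists>(Phi, Psi)\<in>D'. nrm G (fsub g (fsub Psi (fscale (- cnj lam) Phi))) < e"
    using GP_T[OF gp D] by blast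
qed

lemma dense_iff: "GP D D' \<Longrightarrow> dense_range (Hsp G) (nrm G) D lam \<longleftrightarrow> dense_range (Hsp G) (nrm G) D' (- cnj lam)"
  using dense_one[of D D'] dense_one[of D' D, OF GP_sym] by (metis ccnj)

lemma specc_iff: "GP D D' \<Longrightarrow> lam \<in> spec_c (Hsp G) (nrm G) D \<longleftrightarrow> - cnj lam \<in> spec_c (Hsp G) (nrm G) D'"
  unfolding spec_c_def using spec_iff specp_iff dense_iff by blast

lemma specr_iff: "GP D D' \<Longrightarrow> lam \<in> spec_r (Hsp G) (nrm G) D \<longleftrightarrow> - cnj lam \<in> spec_r (Hsp G) (nrm G) D'"
  unfolding spec_r_def using spec_iff specp_iff dense_iff by blast

lemma gen_eig_one:
  assumes gp: "GP D D'" and "Phi \<in> gen_eig (Hsp G) (nrm G) D lam"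
  shows "Cop Phi \<in> gen_eig (Hsp G) (nrm G) D' (- cnj lam)"
proof -
  obtain k Phis Psis where g: "Phis 0 = Phi" "\<forall>n\<le>k. Phis n \<in> Hsp G"
    "\<forall>n<k. (Phis n, Psis n) \<in> D \<and> nrm G (fsub (fsub (Psis n) (fscale lam (Phis n))) (Phis (Suc n))) = 0"
    "nrm G (Phis k) = 0"
    using assms(2) unfolding gen_eig_def by blast
  define Phis' where "Phis' n = (if even n then Cop (Phis n) else fneg (Cop (Phis n)))" for n
  define Psis' where "Psis' n = (if even n then fneg (Cop (Psis n)) else Cop (Psis n))" for n
  have nc: "negcl D'" using gp unfolding GP_def by blast
  have "Phis' 0 = Cop Phi" using g(1) by (simp add: Phis'_def)
  moreover have "\<forall>n\<le>k. Phis' n \<in> Hsp G" using g(2) by (simp add: Phis'_def Hsp_Cop Hsp_fneg)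
  moreover have "\<forall>n<k. (Phis' n, Psis' n) \<in> D'
      \<and> nrm G (fsub (fsub (Psis' n) (fscale (- cnj lam) (Phis' n))) (Phis' (Suc n))) = 0"
  proof (intro allI impI conjI)
    fix n assume n: "n < k"
    have T: "(Cop (Phis n), fneg (Cop (Psis n))) \<in> D'" using g(3) n GP_T[OF gp] by blast
    show "(Phis' n, Psis' n) \<in> D'"
    proof (cases "even n")
      case True then show ?thesis using T by (simp add: Phis'_def Psis'_def)
    next
      case False then show ?thesis using nc T unfolding negcl_def
        by (simp add: Phis'_def Psis'_def) (metis fneg_fneg)
    qed
    have z: "nrm G (fsub (fsub (Psis n) (fscale lam (Phis n))) (Phis (Suc n))) = 0" using g(3) n by blast
    show "nrm G (fsub (fsub (Psis' n) (fscale (- cnj lam) (Phis' n))) (Phis' (Suc n))) = 0"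
    proof (cases "even n")
      case True then show ?thesis using z by (simp add: Phis'_def Psis'_def I3 nrm_fneg nrm_Cop)
    next
      case False then show ?thesis using z by (simp add: Phis'_def Psis'_def I4 nrm_fneg nrm_Cop)
    qed
  qed
  moreover have "nrm G (Phis' k) = 0" using g(4) by (simp add: Phis'_def nrm_fneg nrm_Cop)
  ultimately show ?thesis unfolding gen_eig_def by blast
qed

lemma fam_one:
  assumes gp: "GP D D'" and "fin_alg_mult (Hsp G) (nrm G) D lam"
  shows "fin_alg_mult (Hsp G) (nrm G) D' (- cnj lam)"
proof -
  obtain fs where fs: "set fs \<subseteq> Hsp G" "\<forall>Phi\<in>gen_eig (Hsp G) (nrm G) D lam. \<exists>c. nrm G (fsub Phi (lincomb fs c)) = 0"
    using assms(2) unfolding fin_alg_mult_def by blast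
  have "set (map Cop fs) \<subseteq> Hsp G" using fs(1) Hsp_Cop by auto
  moreover have "\<forall>Phi\<in>gen_eig (Hsp G) (nrm G) D' (- cnj lam). \<exists>c. nrm G (fsub Phi (lincomb (map Cop fs) c)) = 0"
  proof
    fix Phi assume "Phi \<in> gen_eig (Hsp G) (nrm G) D' (- cnj lam)"
    then have "Cop Phi \<in> gen_eig (Hsp G) (nrm G) D lam"
      using gen_eig_one[OF GP_sym[OF gp]] by fastforce
    then obtain c where "nrm G (fsub (Cop Phi) (lincomb fs c)) = 0" using fs(2) by blast
    then have "nrm G (fsub Phi (lincomb (map Cop fs) (\<lambda>k. cnj (c k)))) = 0"
      using I5[of Phi fs c] nrm_Cop by metis
    then show "\<exists>c. nrm G (fsub Phi (lincomb (map Cop fs) c)) = 0" by blast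
  qed
  ultimately show ?thesis unfolding fin_alg_mult_def by blast
qed

lemma specd_one:
  assumes gp: "GP D D'" and "lam \<in> spec_d (Hsp G) (nrm G) D"
  shows "- cnj lam \<in> spec_d (Hsp G) (nrm G) D'"
proof -
  have p: "lam \<in> spec_p (Hsp G) (nrm G) D" and f: "fin_alg_mult (Hsp G) (nrm G) D lam"
    and "\<exists>e>0. \<forall>mu\<in>spec (Hsp G) (nrm G) D. mu \<noteq> lam \<longrightarrow> e \<le> cmod (mu - lam)"
    using assms(2) unfolding spec_d_def by blast+
  then obtain e where e: "e > 0" "\<forall>mu\<in>spec (Hsp G) (nrm G) D. mu \<noteq> lam \<longrightarrow> e \<le> cmod (mu - lam)" by blast
  have "\<forall>mu\<in>spec (Hsp G) (nrm G) D'. mu \<noteq> - cnj lam \<longrightarrow> e \<le> cmod (mu - - cnj lam)"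
  proof (intro ballI impI)
    fix mu assume mu: "mu \<in> spec (Hsp G) (nrm G) D'" "mu \<noteq> - cnj lam"
    then have "- cnj mu \<in> spec (Hsp G) (nrm G) D" using spec_iff[OF GP_sym[OF gp]] by blast
    moreover have "- cnj mu \<noteq> lam" using mu(2) by auto
    ultimately have "e \<le> cmod (- cnj mu - lam)" using e by blast
    also have "cmod (- cnj mu - lam) = cmod (mu - - cnj lam)"
    proof -
      have "- cnj mu - lam = - cnj (mu - - cnj lam)" by simp
      then show ?thesis by (metis complex_mod_cnj norm_minus_cancel)
    qed
    finally show "e \<le> cmod (mu - - cnj lam)" .
  qed
  then show ?thesis unfolding spec_d_def using specp_one[OF gp p] fam_one[OF gp f] e(1) by blast
qed

lemma specd_iff: "GP D D' \<Longrightarrow> lam \<in> spec_d (Hsp G) (nrm G) D \<longleftrightarrow> - cnj lam \<in> spec_d (Hsp G) (nrm G) D'"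
  using specd_one[of D D'] specd_one[of D' D, OF GP_sym] by (metis ccnj)

lemma specess_iff: "GP D D' \<Longrightarrow> lam \<in> spec_ess (Hsp G) (nrm G) D \<longleftrightarrow> - cnj lam \<in> spec_ess (Hsp G) (nrm G) D'"
  unfolding spec_ess_def using spec_iff specd_iff by blast



section \<open>The transformed relation and D^Theta\<close>

definition CT :: "('j,'v) mgraph \<Rightarrow> (cvec \<times> cvec) set \<Rightarrow> (cvec \<times> cvec) set" where
  "CT G Th = {(VC G y, VC G x) | x y. (x, y) \<in> Th}"

lemma gam1_vecs: "gam1 G Phi \<in> vecs (NN G)"
  unfolding gam1_def vecs_def by auto

lemma gam2_vecs: "gam2 G Phi \<in> vecs (NN G)"
  unfolding gam2_def vecs_def by auto

lemma CT_mem: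
  assumes wf: "wf_graph G" and Th: "Th \<subseteq> vecs (NN G) \<times> vecs (NN G)"
    and x: "x \<in> vecs (NN G)" and y: "y \<in> vecs (NN G)"
  shows "(VC G y, VC G x) \<in> CT G Th \<longleftrightarrow> (x, y) \<in> Th"
proof
  assume "(VC G y, VC G x) \<in> CT G Th"
  then obtain x' y' where e: "(x', y') \<in> Th" "VC G y = VC G y'" "VC G x = VC G x'"
    unfolding CT_def by blast
  then have "x' \<in> vecs (NN G)" "y' \<in> vecs (NN G)" using Th by auto
  then have "x = x'" "y = y'" using VC_inj[OF wf] e x y by metis+
  then show "(x, y) \<in> Th" using e by simp
qed (auto simp: CT_def)

lemma Dmax_Cop_iff: "(Phi, Psi) \<in> Dmax G m \<longleftrightarrow> (Cop Phi, fneg (Cop Psi)) \<in> Dmax G m"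
  using Dmax_Cop[of Phi Psi G m] Dmax_Cop[of "Cop Phi" "fneg (Cop Psi)" G m]
  by (auto simp: Cop_fneg)

lemma DTheta_C:
  assumes wf: "wf_graph G" and Th: "Th \<subseteq> vecs (NN G) \<times> vecs (NN G)"
  shows "(Phi, Psi) \<in> DTheta G m Th \<longleftrightarrow> (Cop Phi, fneg (Cop Psi)) \<in> DTheta G m (CT G Th)"
proof (cases "(Phi, Psi) \<in> Dmax G m")
  case True
  have g1: "gam1 G (Cop Phi) = VC G (gam2 G Phi)" by (rule gam1_Cop[OF wf Dmax_isderiv(2)[OF True]])
  have g2: "gam2 G (Cop Phi) = VC G (gam1 G Phi)" by (rule gam2_Cop[OF wf Dmax_isderiv(1)[OF True]])
  show ?thesis
    unfolding DTheta_def using True Dmax_Cop_iff[of Phi Psi G m]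
      CT_mem[OF wf Th gam1_vecs gam2_vecs, of Phi Phi] g1 g2 by simp
next
  case False
  then show ?thesis unfolding DTheta_def using Dmax_Cop_iff[of Phi Psi G m] by simp
qed

lemma mv_neg: "mv n M (\<lambda>k. - x k) = (\<lambda>k. - mv n M x k)"
  unfolding mv_def by (auto intro!: ext simp: sum_negf)

lemma vecs_neg: "x \<in> vecs n \<Longrightarrow> (\<lambda>k. - x k) \<in> vecs n"
  unfolding vecs_def by auto

definition negrel :: "(cvec \<times> cvec) set \<Rightarrow> bool" where
  "negrel Th \<longleftrightarrow> (\<forall>x y. (x, y) \<in> Th \<longrightarrow> ((\<lambda>k. - x k), (\<lambda>k. - y k)) \<in> Th)"

lemma LamW_negrel:
  assumes "lin_rel (NN G) Lam" shows "negrel (LamW G Lam)"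
  unfolding negrel_def
proof (intro allI impI)
  fix x y assume "(x, y) \<in> LamW G Lam"
  then have xy: "x \<in> vecs (NN G)" "y \<in> vecs (NN G)" "(mv (NN G) (Wm G) x, mv (NN G) (Wm G) y) \<in> Lam"
    unfolding LamW_def by auto
  have "((\<lambda>k. (-1) * mv (NN G) (Wm G) x k), (\<lambda>k. (-1) * mv (NN G) (Wm G) y k)) \<in> Lam"
    using assms xy(3) unfolding lin_rel_def by blast
  then show "((\<lambda>k. - x k), (\<lambda>k. - y k)) \<in> LamW G Lam"
    unfolding LamW_def using xy vecs_neg by (simp add: mv_neg)
qed

lemma CT_negrel: "negrel Th \<Longrightarrow> negrel (CT G Th)"
  unfolding negrel_def CT_def by (fastforce simp flip: VC_neg)

lemma DTheta_negcl:
  assumes wf: "wf_graph G" and N: "negrel Th"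
  shows "negcl (DTheta G m Th)"
  unfolding negcl_def
proof (intro allI impI)
  fix Phi Psi assume a: "(Phi, Psi) \<in> DTheta G m Th"
  then have D: "(Phi, Psi) \<in> Dmax G m" and T: "(gam1 G Phi, gam2 G Phi) \<in> Th"
    unfolding DTheta_def by auto
  have "(fneg Phi, fneg Psi) \<in> Dmax G m" by (rule Dmax_fneg[OF D])
  moreover have "(gam1 G (fneg Phi), gam2 G (fneg Phi)) \<in> Th"
    using N T gam1_fneg[OF wf Dmax_isderiv(1)[OF D]] gam2_fneg[OF wf Dmax_isderiv(2)[OF D]]
    unfolding negrel_def by simp
  ultimately show "(fneg Phi, fneg Psi) \<in> DTheta G m Th" unfolding DTheta_def by simp
qed

lemma LamW_sub: "LamW G Lam \<subseteq> vecs (NN G) \<times> vecs (NN G)"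
  unfolding LamW_def by auto

lemma LamC_CT:
  assumes wf: "wf_graph G" and L: "lin_rel (NN G) Lam"
  shows "LamC G Lam = CT G (LamW G Lam)"
proof
  have Lv: "Lam \<subseteq> vecs (NN G) \<times> vecs (NN G)" using L unfolding lin_rel_def by blast
  show "LamC G Lam \<subseteq> CT G (LamW G Lam)"
  proof
    fix p assume "p \<in> LamC G Lam"
    then obtain f f' where p: "p = (VC G (mv (NN G) (Winv G) f'), VC G (mv (NN G) (Winv G) f))" and ff: "(f, f') \<in> Lam"
      unfolding LamC_def by blast
    have "f \<in> vecs (NN G)" "f' \<in> vecs (NN G)" using ff Lv by auto
    then have "(mv (NN G) (Winv G) f, mv (NN G) (Winv G) f') \<in> LamW G Lam"
      unfolding LamW_def using ff W_Winv_apply[OF wf] by simp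
    then show "p \<in> CT G (LamW G Lam)" unfolding CT_def p by blast
  qed
  show "CT G (LamW G Lam) \<subseteq> LamC G Lam"
  proof
    fix p assume "p \<in> CT G (LamW G Lam)"
    then obtain x y where p: "p = (VC G y, VC G x)" and xy: "(x, y) \<in> LamW G Lam"
      unfolding CT_def by blast
    then have v: "x \<in> vecs (NN G)" "y \<in> vecs (NN G)" and l: "(mv (NN G) (Wm G) x, mv (NN G) (Wm G) y) \<in> Lam"
      unfolding LamW_def by auto
    have "p = (VC G (mv (NN G) (Winv G) (mv (NN G) (Wm G) y)), VC G (mv (NN G) (Winv G) (mv (NN G) (Wm G) x)))"
      using p Winv_W_apply[OF wf] v by simp
    then show "p \<in> LamC G Lam" unfolding LamC_def using l by blast
  qed
qed

lemma GP_main: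
  assumes wf: "wf_graph G" and L: "lin_rel (NN G) Lam"
  shows "GP (DTheta G m (LamW G Lam)) (DTheta G m (LamC G Lam))"
  unfolding GP_def Tpair_def
  using DTheta_C[OF wf LamW_sub] LamC_CT[OF wf L] DTheta_negcl[OF wf LamW_negrel[OF L]]
    DTheta_negcl[OF wf CT_negrel[OF LamW_negrel[OF L]]]
  by simp

lemma Csym_iff:
  assumes "Tpair D D'" shows "Csym D \<longleftrightarrow> D = D'"
proof -
  have a: "(Cop Phi, Psi) \<in> D \<longleftrightarrow> (Phi, fneg (Cop Psi)) \<in> D'" for Phi Psi
    using assms unfolding Tpair_def by (metis Cop_Cop)
  have "Csym D \<longleftrightarrow> (\<forall>Phi Psi. (Phi, fneg (Cop Psi)) \<in> D' \<longleftrightarrow> (Phi, fneg (Cop Psi)) \<in> D)"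
    unfolding Csym_def using a by blast
  also have "\<dots> \<longleftrightarrow> (\<forall>Phi Psi. (Phi, Psi) \<in> D' \<longleftrightarrow> (Phi, Psi) \<in> D)"
    by (metis Cop_Cop Cop_fneg fneg_fneg)
  also have "\<dots> \<longleftrightarrow> D = D'" by auto
  finally show ?thesis .
qed



lemma L2on_add:
  assumes "L2on S u" "L2on S v" shows "L2on S (\<lambda>t. u t + v t)"
proof -
  have m: "(\<lambda>t. u t + v t) \<in> borel_measurable (lebesgue_on S)" using assms unfolding L2on_def by auto
  have i: "integrable (lebesgue_on S) (\<lambda>t. 2 * (cmod (u t))\<^sup>2 + 2 * (cmod (v t))\<^sup>2)"
    using assms unfolding L2on_def by auto
  have "integrable (lebesgue_on S) (\<lambda>t. (cmod (u t + v t))\<^sup>2)"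
  proof (rule Bochner_Integration.integrable_bound[OF i])
    show "(\<lambda>t. (cmod (u t + v t))\<^sup>2) \<in> borel_measurable (lebesgue_on S)" using m by measurable
    show "AE t in lebesgue_on S. norm ((cmod (u t + v t))\<^sup>2) \<le> norm (2 * (cmod (u t))\<^sup>2 + 2 * (cmod (v t))\<^sup>2)"
    proof (rule AE_I2)
      fix t
      have "cmod (u t + v t) \<le> cmod (u t) + cmod (v t)" by (rule norm_triangle_ineq)
      then have "(cmod (u t + v t))\<^sup>2 \<le> (cmod (u t) + cmod (v t))\<^sup>2"
        by (simp add: power_mono)
      also have "\<dots> \<le> 2 * (cmod (u t))\<^sup>2 + 2 * (cmod (v t))\<^sup>2"
        using sum_squares_bound[of "cmod (u t)" "cmod (v t)"]
        by (simp add: power2_sum)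
      finally show "norm ((cmod (u t + v t))\<^sup>2) \<le> norm (2 * (cmod (u t))\<^sup>2 + 2 * (cmod (v t))\<^sup>2)" by simp
    qed
  qed
  then show ?thesis using m unfolding L2on_def by blast
qed

lemma L2on_cmult:
  assumes "L2on S u" shows "L2on S (\<lambda>t. c * u t)"
proof -
  have m: "(\<lambda>t. c * u t) \<in> borel_measurable (lebesgue_on S)" using assms unfolding L2on_def by auto
  have "integrable (lebesgue_on S) (\<lambda>t. (cmod c)\<^sup>2 * (cmod (u t))\<^sup>2)"
    using assms unfolding L2on_def by auto
  then have "integrable (lebesgue_on S) (\<lambda>t. (cmod (c * u t))\<^sup>2)"
    by (simp add: norm_mult power_mult_distrib)
  then show ?thesis using m unfolding L2on_def by blast
qed

lemma L2on_diff:
  assumes "L2on S u" "L2on S v" shows "L2on S (\<lambda>t. u t - v t)"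
  using L2on_add[OF assms(1) L2on_cmult[OF assms(2), of "-1"]] by simp

lemma L2on_cont:
  assumes "a < b" "continuous_on {a..b} u" shows "L2on {a<..<b} u"
proof -
  have m: "u \<in> borel_measurable (lebesgue_on {a<..<b})"
    by (rule continuous_imp_measurable_on_sets_lebesgue) (use assms in \<open>auto intro: continuous_on_subset\<close>)
  have "continuous_on {a..b} (\<lambda>t. (cmod (u t))\<^sup>2)" using assms(2) by (intro continuous_intros)
  then have "(\<lambda>t. (cmod (u t))\<^sup>2) absolutely_integrable_on {a..b}"
    by (rule absolutely_integrable_continuous_real)
  then have "set_integrable lebesgue {a..b} (\<lambda>t. (cmod (u t))\<^sup>2)" by simp
  then have "set_integrable lebesgue {a<..<b} (\<lambda>t. (cmod (u t))\<^sup>2)"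
    by (rule set_integrable_subset) auto
  then have "integrable (lebesgue_on {a<..<b}) (\<lambda>t. (cmod (u t))\<^sup>2)"
    by (intro absolutely_integrable_imp_integrable) auto
  then show ?thesis using m unfolding L2on_def by blast
qed

lemma exp_abs_int: "(\<lambda>t. exp (- 2 * t)) absolutely_integrable_on {(a::real)<..}"
proof -
  have "(\<lambda>t. exp (- 2 * t)) integrable_on {a..}"
    using integrable_on_exp_minus_to_infinity[of 2 a] by simp
  then have "(\<lambda>t. exp (- 2 * t)) absolutely_integrable_on {a..}"
    by (subst absolutely_integrable_on_iff_nonneg) auto
  then show ?thesis by (rule set_integrable_subset) auto
qed

lemma L2on_E1: "L2on {a<..} (\<lambda>t. complex_of_real (exp (a - t)))"
proof -
  have m: "(\<lambda>t. complex_of_real (exp (a - t))) \<in> borel_measurable (lebesgue_on {a<..})"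
    by (rule continuous_imp_measurable_on_sets_lebesgue) (auto intro!: continuous_intros)
  have "integrable (lebesgue_on {a<..}) (\<lambda>t. exp (- 2 * t))"
    by (intro absolutely_integrable_imp_integrable exp_abs_int) auto
  then have "integrable (lebesgue_on {a<..}) (\<lambda>t. exp (2 * a) * exp (- 2 * t))"
    by (rule integrable_mult_right)
  moreover have "(\<lambda>t. (cmod (complex_of_real (exp (a - t))))\<^sup>2) = (\<lambda>t. exp (2 * a) * exp (- 2 * t))"
    by (rule ext) (simp add: power2_eq_square flip: exp_add)
  ultimately show ?thesis using m unfolding L2on_def by metis
qed

lemma L2on_E2: "L2on {..<b} (\<lambda>t. complex_of_real (exp (t - b)))"
proof -
  have m: "(\<lambda>t. complex_of_real (exp (t - b))) \<in> borel_measurable (lebesgue_on {..<b})"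
    by (rule continuous_imp_measurable_on_sets_lebesgue) (auto intro!: continuous_intros)
  have "(\<lambda>t. exp (- 2 * t)) absolutely_integrable_on {-b<..}" by (rule exp_abs_int)
  then have "(\<lambda>x. (\<lambda>t. exp (- 2 * t)) (- x)) absolutely_integrable_on {..<b}"
    using has_absolute_integral_reflect_real[of "{..<b}" "{-b<..}" "\<lambda>t. exp (- 2 * t)"
        "integral {-b<..} (\<lambda>t. exp (- 2 * t))"]
    by (force simp: image_def)
  then have "integrable (lebesgue_on {..<b}) (\<lambda>t. exp (2 * t))"
    by (intro absolutely_integrable_imp_integrable) auto
  then have "integrable (lebesgue_on {..<b}) (\<lambda>t. exp (- 2 * b) * exp (2 * t))"
    by (rule integrable_mult_right)
  moreover have "(\<lambda>t. (cmod (complex_of_real (exp (t - b))))\<^sup>2) = (\<lambda>t. exp (- 2 * b) * exp (2 * t))"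
    by (rule ext) (simp add: power2_eq_square flip: exp_add)
  ultimately show ?thesis using m unfolding L2on_def by metis
qed

lemma isderiv_I:
  assumes "L2on S u" "L2on S g" "\<And>t. t \<in> S \<Longrightarrow> (u has_vector_derivative g t) (at t)"
    and "\<And>x y. x \<in> S \<Longrightarrow> y \<in> S \<Longrightarrow> {x..y} \<subseteq> S"
  shows "isderiv S u g"
  unfolding isderiv_def
proof (intro conjI ballI impI assms(1,2))
  fix x y assume xy: "x \<in> S" "y \<in> S" "x \<le> y"
  have "(u has_vector_derivative g z) (at z within {x..y})" if "z \<in> {x..y}" for z
  proof -
    have "z \<in> S" using assms(4)[OF xy(1,2)] that by blast
    then show ?thesis using assms(3) has_vector_derivative_at_within by blast
  qed
  then show "(g has_integral u y - u x) {x..y}"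
    using xy(3) by (intro fundamental_theorem_of_calculus) auto
qed

section \<open>Boundary value surjectivity\<close>

definition cf :: "('j,'v) mgraph \<Rightarrow> 'j \<Rightarrow> complex \<Rightarrow> complex \<Rightarrow> real \<Rightarrow> complex" where
  "cf G j p q t = (if j \<in> g_int G then p + (q - p) * of_real ((t - g_a G j) / (g_b G j - g_a G j))
     else if g_rho G j = -1 then p * of_real (exp (g_a G j - t)) else p * of_real (exp (t - g_b G j)))"

definition cd :: "('j,'v) mgraph \<Rightarrow> 'j \<Rightarrow> complex \<Rightarrow> complex \<Rightarrow> real \<Rightarrow> complex" where
  "cd G j p q t = (if j \<in> g_int G then (q - p) * of_real (1 / (g_b G j - g_a G j))
     else if g_rho G j = -1 then p * of_real (- exp (g_a G j - t)) else p * of_real (exp (t - g_b G j)))"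

lemma Ij_interval: "x \<in> Ij G j \<Longrightarrow> y \<in> Ij G j \<Longrightarrow> {x..y} \<subseteq> Ij G j"
  unfolding Ij_def by (auto split: if_splits)

lemma cf_deriv: "wf_graph G \<Longrightarrow> j \<in> JJ G \<Longrightarrow> (cf G j p q has_vector_derivative cd G j p q t) (at t)"
proof -
  assume wf: "wf_graph G"
  let ?a = "g_a G j" and ?b = "g_b G j"
  have d1: "((\<lambda>t. (t - ?a) / (?b - ?a)) has_real_derivative 1 / (?b - ?a)) (at t)" if "j \<in> g_int G"
  proof -
    have "?b - ?a \<noteq> 0" using wfD(4)[OF wf that] by simp
    then show ?thesis by (auto intro!: derivative_eq_intros)
  qed
  have d2: "((\<lambda>t. exp (?a - t)) has_real_derivative - exp (?a - t)) (at t)"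
    by (auto intro!: derivative_eq_intros)
  have d3: "((\<lambda>t. exp (t - ?b)) has_real_derivative exp (t - ?b)) (at t)"
    by (auto intro!: derivative_eq_intros)
  have i: "((\<lambda>t. p + (q - p) * of_real ((t - ?a) / (?b - ?a))) has_vector_derivative
        0 + (q - p) * of_real (1 / (?b - ?a))) (at t)" if "j \<in> g_int G"
    using that by (intro has_vector_derivative_add has_vector_derivative_const has_vector_derivative_mult_right
        has_vector_derivative_of_real d1)
  have e1: "((\<lambda>t. p * of_real (exp (?a - t))) has_vector_derivative p * of_real (- exp (?a - t))) (at t)"
    by (intro has_vector_derivative_mult_right has_vector_derivative_of_real d2)
  have e2: "((\<lambda>t. p * of_real (exp (t - ?b))) has_vector_derivative p * of_real (exp (t - ?b))) (at t)"
    by (intro has_vector_derivative_mult_right has_vector_derivative_of_real d3)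
  show ?thesis
  proof (cases "j \<in> g_int G")
    case True
    have "cf G j p q = (\<lambda>t. p + (q - p) * of_real ((t - ?a) / (?b - ?a)))"
      using True by (auto simp: cf_def intro!: ext)
    then show ?thesis using i[OF True] True by (simp add: cd_def)
  next
    case False
    show ?thesis
    proof (cases "g_rho G j = -1")
      case True
      have "cf G j p q = (\<lambda>t. p * of_real (exp (?a - t)))"
        using True False by (auto simp: cf_def intro!: ext)
      then show ?thesis using e1 True False by (simp add: cd_def)
    next
      case F2: False
      have "cf G j p q = (\<lambda>t. p * of_real (exp (t - ?b)))"
        using F2 False by (auto simp: cf_def intro!: ext)
      then show ?thesis using e2 F2 False by (simp add: cd_def)
    qed
  qed
qed

lemma cf_L2:
  assumes wf: "wf_graph G" and j: "j \<in> JJ G"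
  shows "L2on (Ij G j) (cf G j p q) \<and> L2on (Ij G j) (cd G j p q)"
proof -
  let ?a = "g_a G j" and ?b = "g_b G j"
  show ?thesis
  proof (cases "j \<in> g_int G")
    case True
    have ab: "?a < ?b" using wfD(4)[OF wf True] by blast
    have I: "Ij G j = {?a<..<?b}" using True by (simp add: Ij_def)
    have "continuous_on {?a..?b} (cf G j p q)" "continuous_on {?a..?b} (cd G j p q)"
      using True ab by (auto simp: cf_def cd_def intro!: continuous_intros)
    then show ?thesis unfolding I using L2on_cont[OF ab] by blast
  next
    case False
    show ?thesis
    proof (cases "g_rho G j = -1")
      case True
      have I: "Ij G j = {?a<..}" using True False by (simp add: Ij_def)
      have "cf G j p q = (\<lambda>t. p * of_real (exp (?a - t)))" "cd G j p q = (\<lambda>t. (- p) * of_real (exp (?a - t)))"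
        using True False by (auto simp: cf_def cd_def intro!: ext)
      then show ?thesis unfolding I using L2on_cmult[OF L2on_E1] by metis
    next
      case F2: False
      have I: "Ij G j = {..<?b}" using F2 False by (simp add: Ij_def)
      have "cf G j p q = (\<lambda>t. p * of_real (exp (t - ?b)))" "cd G j p q = (\<lambda>t. p * of_real (exp (t - ?b)))"
        using F2 False by (auto simp: cf_def cd_def intro!: ext)
      then show ?thesis unfolding I using L2on_cmult[OF L2on_E2] by metis
    qed
  qed
qed

lemma cf_isderiv:
  assumes wf: "wf_graph G" and j: "j \<in> JJ G"
  shows "isderiv (Ij G j) (cf G j p q) (cd G j p q)"
  using cf_L2[OF wf j] cf_deriv[OF wf j] by (intro isderiv_I Ij_interval) auto

lemma cf_bl:
  assumes wf: "wf_graph G" and "j \<in> g_int G \<or> g_rho G j = -1"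
  shows "bl (g_a G j) (cf G j p q) = p"
proof -
  let ?a = "g_a G j" and ?b = "g_b G j"
  have "(cf G j p q \<longlongrightarrow> p) (at_right ?a)"
  proof (cases "j \<in> g_int G")
    case True
    have "?b - ?a \<noteq> 0" using wfD(4)[OF wf True] by simp
    then have "((\<lambda>t. p + (q - p) * of_real ((t - ?a) / (?b - ?a))) \<longlongrightarrow> p + (q - p) * of_real ((?a - ?a) / (?b - ?a))) (at_right ?a)"
      by (intro tendsto_intros)
    moreover have "cf G j p q = (\<lambda>t. p + (q - p) * of_real ((t - ?a) / (?b - ?a)))"
      using True by (auto simp: cf_def intro!: ext)
    ultimately show ?thesis by simp
  next
    case False
    then have r: "g_rho G j = -1" using assms(2) by blast
    have "((\<lambda>t. p * of_real (exp (?a - t))) \<longlongrightarrow> p * of_real (exp (?a - ?a))) (at_right ?a)"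
      by (intro tendsto_intros)
    moreover have "cf G j p q = (\<lambda>t. p * of_real (exp (?a - t)))"
      using False r by (auto simp: cf_def intro!: ext)
    ultimately show ?thesis by simp
  qed
  then show ?thesis unfolding bl_def by (rule tendsto_Lim[OF trivial_limit_at_right_real])
qed

lemma cf_br_int:
  assumes wf: "wf_graph G" and I: "j \<in> g_int G"
  shows "br (g_b G j) (cf G j p q) = q"
proof -
  let ?a = "g_a G j" and ?b = "g_b G j"
  have ab: "?a < ?b" using wfD(4)[OF wf I] by blast
  have "((\<lambda>t. p + (q - p) * of_real ((t - ?a) / (?b - ?a))) \<longlongrightarrow> p + (q - p) * of_real ((?b - ?a) / (?b - ?a))) (at_left ?b)"
    using ab by (intro tendsto_intros) simp
  moreover have "cf G j p q = (\<lambda>t. p + (q - p) * of_real ((t - ?a) / (?b - ?a)))"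
    using I by (auto simp: cf_def intro!: ext)
  ultimately have "(cf G j p q \<longlongrightarrow> q) (at_left ?b)" using ab by simp
  then show ?thesis unfolding br_def by (rule tendsto_Lim[OF trivial_limit_at_left_real])
qed

lemma cf_br_ext:
  assumes wf: "wf_graph G" and "j \<notin> g_int G" "g_rho G j \<noteq> -1"
  shows "br (g_b G j) (cf G j p q) = p"
proof -
  let ?b = "g_b G j"
  have "((\<lambda>t. p * of_real (exp (t - ?b))) \<longlongrightarrow> p * of_real (exp (?b - ?b))) (at_left ?b)"
    by (intro tendsto_intros)
  moreover have "cf G j p q = (\<lambda>t. p * of_real (exp (t - ?b)))"
    using assms by (auto simp: cf_def intro!: ext)
  ultimately have "(cf G j p q \<longlongrightarrow> p) (at_left ?b)" by simp
  then show ?thesis unfolding br_def by (rule tendsto_Lim[OF trivial_limit_at_left_real])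
qed

definition li :: "('j,'v) mgraph \<Rightarrow> 'j \<times> 'v \<Rightarrow> nat" where
  "li G l = (SOME k. k < NN G \<and> glabels G ! k = l)"

lemma li_nth: assumes wf: "wf_graph G" and k: "k < NN G" shows "li G (glabels G ! k) = k"
proof -
  have ex: "\<exists>k'. k' < NN G \<and> glabels G ! k' = glabels G ! k" using k by blast
  have "li G (glabels G ! k) < NN G \<and> glabels G ! (li G (glabels G ! k)) = glabels G ! k"
    unfolding li_def by (rule someI_ex[OF ex])
  then show ?thesis using distinct_glabels[OF wf] k unfolding NN_def by (metis nth_eq_iff_index_eq)
qed

definition sp :: "('j,'v) mgraph \<Rightarrow> 'j \<Rightarrow> complex \<Rightarrow> complex" where
  "sp G j c = (if j \<in> g_int G \<or> g_rho G j = -1 then - \<i> * c else \<i> * c)"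

definition bP :: "('j,'v) mgraph \<Rightarrow> cvec \<Rightarrow> cvec \<Rightarrow> 'j fn" where
  "bP G x y j t = (cf G j (x (li G (j, g_ini G j))) (x (li G (j, g_ter G j))) t,
                  cf G j (sp G j (y (li G (j, g_ini G j)))) (\<i> * y (li G (j, g_ter G j))) t)"

definition bP' :: "('j,'v) mgraph \<Rightarrow> cvec \<Rightarrow> cvec \<Rightarrow> 'j fn" where
  "bP' G x y j t = (cd G j (x (li G (j, g_ini G j))) (x (li G (j, g_ter G j))) t,
                  cd G j (sp G j (y (li G (j, g_ini G j)))) (\<i> * y (li G (j, g_ter G j))) t)"

lemma gl_incident:
  assumes "k < NN G" "glabels G ! k = (j, v)"
  shows "j \<in> JJ G" "incident G j v"
proof -
  have "(j, v) \<in> set (glabels G)" using assms unfolding NN_def by (metis nth_mem)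
  then show "j \<in> JJ G" "incident G j v" by (auto simp: set_glabels)
qed

lemma bP_gam1:
  assumes wf: "wf_graph G" and x: "x \<in> vecs (NN G)"
  shows "gam1 G (bP G x y) = x"
proof (rule ext)
  fix k show "gam1 G (bP G x y) k = x k"
  proof (cases "k < NN G")
    case True
    obtain j v where jv: "glabels G ! k = (j, v)" by fastforce
    have j: "j \<in> JJ G" and inc: "incident G j v" using gl_incident[OF True jv] by auto
    have lk: "li G (j, v) = k" using li_nth[OF wf True] jv by simp
    have f: "(\<lambda>t. fst (bP G x y j t)) = cf G j (x (li G (j, g_ini G j))) (x (li G (j, g_ter G j)))"
      by (simp add: bP_def)
    show ?thesis
    proof (cases "j \<in> g_int G")
      case I: True
      show ?thesis
      proof (cases "v = g_ini G j")
        case True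
        then show ?thesis using I jv \<open>k < NN G\<close> lk cf_bl[OF wf, of j] by (simp add: gam1_def f)
      next
        case False
        then have "v = g_ter G j" using inc I by (simp add: incident_def)
        then show ?thesis using I False jv \<open>k < NN G\<close> lk cf_br_int[OF wf I] by (simp add: gam1_def f)
      qed
    next
      case I: False
      then have v: "v = g_ini G j" using inc by (simp add: incident_def)
      show ?thesis
      proof (cases "g_rho G j = -1")
        case True
        then show ?thesis using I v jv \<open>k < NN G\<close> lk cf_bl[OF wf, of j] by (simp add: gam1_def f bdry_def)
      next
        case False
        then show ?thesis using I v jv \<open>k < NN G\<close> lk cf_br_ext[OF wf I False] by (simp add: gam1_def f bdry_def)
      qed
    qed
  qed (use x in \<open>simp add: gam1_def vecs_def\<close>)
qed

lemma bP_gam2: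
  assumes wf: "wf_graph G" and y: "y \<in> vecs (NN G)"
  shows "gam2 G (bP G x y) = y"
proof (rule ext)
  fix k show "gam2 G (bP G x y) k = y k"
  proof (cases "k < NN G")
    case True
    obtain j v where jv: "glabels G ! k = (j, v)" by fastforce
    have j: "j \<in> JJ G" and inc: "incident G j v" using gl_incident[OF True jv] by auto
    have lk: "li G (j, v) = k" using li_nth[OF wf True] jv by simp
    have f: "(\<lambda>t. snd (bP G x y j t)) = cf G j (sp G j (y (li G (j, g_ini G j)))) (\<i> * y (li G (j, g_ter G j)))"
      by (simp add: bP_def)
    show ?thesis
    proof (cases "j \<in> g_int G")
      case I: True
      show ?thesis
      proof (cases "v = g_ini G j")
        case True
        then show ?thesis using I jv \<open>k < NN G\<close> lk cf_bl[OF wf, of j] by (simp add: gam2_def f sp_def)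
      next
        case False
        then have "v = g_ter G j" using inc I by (simp add: incident_def)
        then show ?thesis using I False jv \<open>k < NN G\<close> lk cf_br_int[OF wf I] by (simp add: gam2_def f)
      qed
    next
      case I: False
      then have v: "v = g_ini G j" using inc by (simp add: incident_def)
      show ?thesis
      proof (cases "g_rho G j = -1")
        case True
        then show ?thesis using I v jv \<open>k < NN G\<close> lk cf_bl[OF wf, of j] by (simp add: gam2_def f bdry_def sp_def)
      next
        case False
        then have r: "g_rho G j = 1" using wfD(5)[OF wf, of j] j I by (auto simp: EE_def)
        then show ?thesis using I v jv \<open>k < NN G\<close> lk cf_br_ext[OF wf I False] by (simp add: gam2_def f bdry_def sp_def)
      qed
    qed
  qed (use y in \<open>simp add: gam2_def vecs_def\<close>)
qed

lemma bsurj: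
  assumes wf: "wf_graph G" and x: "x \<in> vecs (NN G)" and y: "y \<in> vecs (NN G)"
  shows "\<exists>Phi Psi. (Phi, Psi) \<in> Dmax G m \<and> gam1 G Phi = x \<and> gam2 G Phi = y"
proof -
  let ?Phi = "bP G x y" and ?Phi' = "bP' G x y"
  let ?Psi = "\<lambda>j t. (- \<i> * snd (?Phi' j t) + complex_of_real m * fst (?Phi j t),
                       - \<i> * fst (?Phi' j t) - complex_of_real m * snd (?Phi j t))"
  have d: "\<forall>j\<in>JJ G. isderiv (Ij G j) (\<lambda>t. fst (?Phi j t)) (\<lambda>t. fst (?Phi' j t))
                      \<and> isderiv (Ij G j) (\<lambda>t. snd (?Phi j t)) (\<lambda>t. snd (?Phi' j t))"
    using cf_isderiv[OF wf] by (simp add: bP_def bP'_def)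
  have L: "L2on (Ij G j) (\<lambda>t. fst (?Phi j t)) \<and> L2on (Ij G j) (\<lambda>t. snd (?Phi j t))
         \<and> L2on (Ij G j) (\<lambda>t. fst (?Phi' j t)) \<and> L2on (Ij G j) (\<lambda>t. snd (?Phi' j t))" if "j \<in> JJ G" for j
    using cf_L2[OF wf that] by (simp add: bP_def bP'_def)
  have H1: "?Phi \<in> Hsp G" unfolding Hsp_def using L by blast
  have H2: "?Psi \<in> Hsp G" unfolding Hsp_def
  proof (intro CollectI ballI conjI)
    fix j assume "j \<in> JJ G"
    note l = L[OF this]
    show "L2on (Ij G j) (\<lambda>t. fst (?Psi j t))"
      using L2on_add[OF L2on_cmult[of _ _ "- \<i>"] L2on_cmult[of _ _ "complex_of_real m"]] l by simp
    show "L2on (Ij G j) (\<lambda>t. snd (?Psi j t))"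
      using L2on_diff[OF L2on_cmult[of _ _ "- \<i>"] L2on_cmult[of _ _ "complex_of_real m"]] l by simp
  qed
  have n: "nrm G (fsub ?Psi ?Psi) = 0" unfolding nrm_def fsub_def by simp
  have "(?Phi, ?Psi) \<in> Dmax G m" by (rule Dmax_I[OF H1 H2 d n])
  then show ?thesis using bP_gam1[OF wf x] bP_gam2[OF wf y] by blast
qed



section \<open>Linear algebra on C^n\<close>

definition sc :: "complex \<Rightarrow> cvec \<Rightarrow> cvec" where "sc c f = (\<lambda>k. c * f k)"

interpretation VS: vector_space sc
  by unfold_locales (auto simp: sc_def algebra_simps fun_eq_iff)

interpretation VSP: vector_space_pair sc sc ..

definition ev :: "nat \<Rightarrow> cvec" where "ev l = (\<lambda>k. if k = l then 1 else 0)"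

lemma sum_fun_apply: "(\<Sum>i\<in>S. f i) k = (\<Sum>i\<in>S. (f i :: cvec) k)"
  by (induction S rule: infinite_finite_induct) auto

lemma sc_apply[simp]: "sc c f k = c * f k" by (simp add: sc_def)

lemma vecs_subspace: "VS.subspace (vecs n)"
  unfolding VS.subspace_def vecs_def by auto

lemma vecs_sum: assumes "f \<in> vecs n" shows "f = (\<Sum>l<n. sc (f l) (ev l))"
proof (rule ext)
  fix k
  have "(\<Sum>l<n. sc (f l) (ev l)) k = (\<Sum>l<n. if l = k then f k else 0)"
    unfolding sum_fun_apply by (rule sum.cong) (auto simp: ev_def)
  also have "\<dots> = f k" using assms by (auto simp: vecs_def)
  finally show "f k = (\<Sum>l<n. sc (f l) (ev l)) k" by simp
qed

lemma ev_vecs: "l < n \<Longrightarrow> ev l \<in> vecs n"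
  unfolding ev_def vecs_def by auto

lemma span_EB: "VS.span (ev ` {..<n}) = vecs n"
proof
  show "VS.span (ev ` {..<n}) \<subseteq> vecs n"
    by (rule VS.span_minimal) (auto simp: ev_vecs vecs_subspace)
  show "vecs n \<subseteq> VS.span (ev ` {..<n})"
  proof
    fix f assume "f \<in> vecs n"
    then have "f = (\<Sum>l<n. sc (f l) (ev l))" by (rule vecs_sum)
    also have "\<dots> \<in> VS.span (ev ` {..<n})"
      by (intro VS.span_sum VS.span_scale VS.span_base) auto
    finally show "f \<in> VS.span (ev ` {..<n})" .
  qed
qed

lemma inj_ev: "inj ev"
  unfolding inj_def ev_def by (metis one_neq_zero)

lemma indep_EB: "VS.independent (ev ` {..<n})"
proof -
  have "\<not> VS.dependent (ev ` {..<n})"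
  proof
    assume "VS.dependent (ev ` {..<n})"
    then obtain u where u: "\<exists>v\<in>ev ` {..<n}. u v \<noteq> 0" "(\<Sum>v\<in>ev ` {..<n}. sc (u v) v) = 0"
      using VS.dependent_finite[of "ev ` {..<n}"] by auto
    then obtain l where l: "l < n" "u (ev l) \<noteq> 0" by auto
    have "(\<Sum>v\<in>ev ` {..<n}. sc (u v) v) l = (\<Sum>i<n. u (ev i) * ev i l)"
      by (simp add: sum_fun_apply sum.reindex inj_on_subset[OF inj_ev])
    also have "\<dots> = (\<Sum>i<n. if i = l then u (ev l) else 0)"
      by (rule sum.cong) (auto simp: ev_def)
    also have "\<dots> = u (ev l)" using l by simp
    finally show False using u(2) l(2) by simp
  qed
  then show ?thesis by simp
qed

lemma card_EB: "card (ev ` {..<n}) = n"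
  by (simp add: card_image inj_on_subset[OF inj_ev])

lemma basis_card:
  assumes "B \<subseteq> vecs n" "vecs n \<subseteq> VS.span B" "VS.independent B"
  shows "finite B \<and> card B = n"
proof -
  have f: "finite B" using VS.independent_span_bound[of "ev ` {..<n}" B] assms span_EB by auto
  have "card B = VS.dim (vecs n)" by (rule VS.basis_card_eq_dim[OF assms(1,2,3)])
  moreover have "card (ev ` {..<n}) = VS.dim (vecs n)"
    by (rule VS.basis_card_eq_dim) (auto simp: span_EB ev_vecs indep_EB)
  ultimately show ?thesis using f card_EB by simp
qed

lemma mv_lin: "Vector_Spaces.linear sc sc (mv n M)"
  unfolding Vector_Spaces.linear_iff
  by (auto intro!: ext simp: mv_def sum.distrib sum_distrib_left algebra_simps VS.vector_space_axioms)

lemma mat_rep: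
  assumes L: "Vector_Spaces.linear sc sc L" and V: "\<And>v. v \<in> vecs n \<Longrightarrow> L v \<in> vecs n" and f: "f \<in> vecs n"
  shows "mv n (\<lambda>k l. L (ev l) k) f = L f"
proof (rule ext)
  fix k
  have "L f = (\<Sum>l<n. sc (f l) (L (ev l)))"
    by (subst vecs_sum[OF f]) (simp add: VSP.linear_sum[OF L] VSP.linear_scale[OF L])
  then have Lk: "L f k = (\<Sum>l<n. f l * L (ev l) k)" by (simp add: sum_fun_apply)
  show "mv n (\<lambda>k l. L (ev l) k) f k = L f k"
  proof (cases "k < n")
    case True then show ?thesis using Lk by (simp add: mv_def mult.commute)
  next
    case False then show ?thesis using V[OF f] by (simp add: mv_def vecs_def)
  qed
qed

lemma col_mv: "l < n \<Longrightarrow> mv n M (ev l) = (\<lambda>k. if k < n then M k l else 0)"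
proof (rule ext)
  fix k assume l: "l < n"
  have "(\<Sum>r<n. M k r * ev l r) = (\<Sum>r<n. if r = l then M k l else 0)"
    by (rule sum.cong) (auto simp: ev_def)
  then show "mv n M (ev l) k = (if k < n then M k l else 0)" using l by (simp add: mv_def)
qed

lemma mm_col: "l < n \<Longrightarrow> k < n \<Longrightarrow> mm n X M k l = mv n X (mv n M (ev l)) k"
  by (subst col_mv) (simp_all add: mm_def mv_def)

lemma mv_add: "mv n M (f + g) = mv n M f + mv n M g"
  using VSP.linear_add[OF mv_lin] .

lemma mv_diff: "mv n M (f - g) = mv n M f - mv n M g"
  using VSP.linear_diff[OF mv_lin] .

lemma mv_scale: "mv n M (sc c f) = sc c (mv n M f)"
  using VSP.linear_scale[OF mv_lin] .

lemma mv_sum: "mv n M (\<Sum>i\<in>S. f i) = (\<Sum>i\<in>S. mv n M (f i))"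
  using VSP.linear_sum[OF mv_lin] .

lemma mv_zero: "mv n M 0 = 0"
  using VSP.linear_0[OF mv_lin] .

lemma vecs_add: "f \<in> vecs n \<Longrightarrow> g \<in> vecs n \<Longrightarrow> f + g \<in> vecs n"
  using vecs_subspace VS.subspace_add by blast

lemma vecs_diff: "f \<in> vecs n \<Longrightarrow> g \<in> vecs n \<Longrightarrow> f - g \<in> vecs n"
  using vecs_subspace VS.subspace_diff by blast

lemma vecs_sc: "f \<in> vecs n \<Longrightarrow> sc c f \<in> vecs n"
  using vecs_subspace VS.subspace_scale by blast

lemma vecs_sum': "(\<And>i. i \<in> S \<Longrightarrow> f i \<in> vecs n) \<Longrightarrow> (\<Sum>i\<in>S. f i) \<in> vecs n"
  using vecs_subspace VS.subspace_sum by blast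

lemma zero_vecs: "0 \<in> vecs n"
  unfolding vecs_def by simp

lemma LA_hard:
  fixes n :: nat and A B A' B' :: cmat
  defines "T \<equiv> \<lambda>u u'. mv n A u - mv n B u'" and "T' \<equiv> \<lambda>u u'. mv n A' u - mv n B' u'"
  assumes K: "\<And>u u'. u \<in> vecs n \<Longrightarrow> u' \<in> vecs n \<Longrightarrow> T u u' = 0 \<longleftrightarrow> T' u u' = 0"
  shows "\<exists>X. bij_mat n X \<and> meq n A' (mm n X A) \<and> meq n B' (mm n X B)"
proof -
  have Tlin: "T (u1 - u2) (u1' - u2') = T u1 u1' - T u2 u2'" for u1 u2 u1' u2'
    unfolding T_def by (simp add: mv_diff algebra_simps)
  have T'lin: "T' (u1 - u2) (u1' - u2') = T' u1 u1' - T' u2 u2'" for u1 u2 u1' u2'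
    unfolding T'_def by (simp add: mv_diff algebra_simps)
  have Tsum: "T (\<Sum>i\<in>S. sc (c i) (f i)) (\<Sum>i\<in>S. sc (c i) (f' i)) = (\<Sum>i\<in>S. sc (c i) (T (f i) (f' i)))" for S c f f'
    unfolding T_def by (simp add: mv_sum mv_scale VS.scale_right_diff_distrib sum_subtractf)
  have T'sum: "T' (\<Sum>i\<in>S. sc (c i) (f i)) (\<Sum>i\<in>S. sc (c i) (f' i)) = (\<Sum>i\<in>S. sc (c i) (T' (f i) (f' i)))" for S c f f'
    unfolding T'_def by (simp add: mv_sum mv_scale VS.scale_right_diff_distrib sum_subtractf)
  have Tv: "T u u' \<in> vecs n" "T' u u' \<in> vecs n" for u u'
    unfolding T_def T'_def by (auto intro: vecs_diff)
  define R where "R = {T u u' | u u'. u \<in> vecs n \<and> u' \<in> vecs n}"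
  have Rsub: "VS.subspace R"
    unfolding VS.subspace_def
  proof (intro conjI ballI allI)
    show "0 \<in> R" unfolding R_def using Tlin[of 0 0 0 0] zero_vecs by (auto intro!: exI[of _ 0])
  next
    fix x y assume "x \<in> R" "y \<in> R"
    then obtain u u' v v' where "x = T u u'" "y = T v v'" "u \<in> vecs n" "u' \<in> vecs n" "v \<in> vecs n" "v' \<in> vecs n"
      unfolding R_def by blast
    then show "x + y \<in> R" unfolding R_def
      by (intro CollectI exI[of _ "u + v"] exI[of _ "u' + v'"]) (simp add: T_def mv_add vecs_add)
  next
    fix c x assume "x \<in> R"
    then obtain u u' where "x = T u u'" "u \<in> vecs n" "u' \<in> vecs n"
      unfolding R_def by blast
    then show "sc c x \<in> R" unfolding R_def
      by (intro CollectI exI[of _ "sc c u"] exI[of _ "sc c u'"]) (simp add: T_def mv_scale vecs_sc VS.scale_right_diff_distrib)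
  qed
  have RV: "R \<subseteq> vecs n" unfolding R_def using Tv by auto
  obtain Bk where Bk: "Bk \<subseteq> R" "VS.independent Bk" "R \<subseteq> VS.span Bk"
  proof -
    have e: "{} \<subseteq> R" by simp
    show ?thesis
      by (rule VS.maximal_independent_subset_extend[OF e VS.independent_empty]) (rule that)
  qed
  have spanBk: "VS.span Bk = R"
    using Bk VS.span_minimal[OF Bk(1) Rsub] by blast
  have fBk: "finite Bk"
    using VS.independent_span_bound[of "ev ` {..<n}" Bk] Bk RV span_EB by auto
  define pr where "pr r = (SOME p. fst p \<in> vecs n \<and> snd p \<in> vecs n \<and> T (fst p) (snd p) = r)" for r
  have pr: "fst (pr r) \<in> vecs n \<and> snd (pr r) \<in> vecs n \<and> T (fst (pr r)) (snd (pr r)) = r" if rR: "r \<in> R" for r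
  proof -
    obtain u u' where "r = T u u'" "u \<in> vecs n" "u' \<in> vecs n" using rR unfolding R_def by blast
    then have "\<exists>p. fst p \<in> vecs n \<and> snd p \<in> vecs n \<and> T (fst p) (snd p) = r" by (intro exI[of _ "(u, u')"]) simp
    then show ?thesis unfolding pr_def by (rule someI_ex)
  qed
  define phi where "phi r = T' (fst (pr r)) (snd (pr r))" for r
  have KP: "phi (T u u') = T' u u'" if "u \<in> vecs n" "u' \<in> vecs n" for u u'
  proof -
    let ?r = "T u u'"
    have r: "?r \<in> R" unfolding R_def using that by blast
    note p = pr[OF r]
    have "T (u - fst (pr ?r)) (u' - snd (pr ?r)) = 0" using p by (simp add: Tlin)
    then have "T' (u - fst (pr ?r)) (u' - snd (pr ?r)) = 0"
      using K[of "u - fst (pr ?r)" "u' - snd (pr ?r)"] p that by (simp add: vecs_diff)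
    then show ?thesis unfolding phi_def by (simp add: T'lin)
  qed
  define psi where "psi = VSP.construct Bk phi"
  have psi_lin: "Vector_Spaces.linear sc sc psi" unfolding psi_def by (rule VSP.linear_construct[OF Bk(2)])
  have psi_B: "psi b = phi b" if "b \<in> Bk" for b unfolding psi_def by (rule VSP.construct_basis[OF Bk(2) that])
  have KX: "psi (T u u') = T' u u'" if "u \<in> vecs n" "u' \<in> vecs n" for u u'
  proof -
    have "T u u' \<in> VS.span Bk" using spanBk that unfolding R_def by blast
    then obtain c where c: "T u u' = (\<Sum>b\<in>Bk. sc (c b) b)" using VS.span_finite[OF fBk] by auto
    let ?U = "\<Sum>b\<in>Bk. sc (c b) (fst (pr b))" and ?U' = "\<Sum>b\<in>Bk. sc (c b) (snd (pr b))"
    have UV: "?U \<in> vecs n" "?U' \<in> vecs n" using pr Bk(1) by (auto intro!: vecs_sum' vecs_sc)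
    have "T ?U ?U' = (\<Sum>b\<in>Bk. sc (c b) (T (fst (pr b)) (snd (pr b))))" by (rule Tsum)
    also have "\<dots> = (\<Sum>b\<in>Bk. sc (c b) b)" using pr Bk(1) by (intro sum.cong) auto
    finally have e1: "T ?U ?U' = T u u'" using c by simp
    have "psi (T u u') = (\<Sum>b\<in>Bk. sc (c b) (psi b))"
      unfolding c by (simp add: VSP.linear_sum[OF psi_lin] VSP.linear_scale[OF psi_lin])
    also have "\<dots> = (\<Sum>b\<in>Bk. sc (c b) (T' (fst (pr b)) (snd (pr b))))"
      using psi_B by (simp add: phi_def)
    also have "\<dots> = T' ?U ?U'" by (rule T'sum[symmetric])
    also have "\<dots> = phi (T ?U ?U')" using KP[OF UV] by simp
    also have "\<dots> = T' u u'" using e1 KP[OF that] by simp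
    finally show ?thesis .
  qed
  have psi_inj: "inj_on psi R"
  proof (rule inj_onI)
    fix x y assume "x \<in> R" "y \<in> R" "psi x = psi y"
    then obtain u u' v v' where xy: "x = T u u'" "y = T v v'" "u \<in> vecs n" "u' \<in> vecs n" "v \<in> vecs n" "v' \<in> vecs n"
      and e: "psi (T u u') = psi (T v v')"
      unfolding R_def by blast
    then have "T' u u' = T' v v'" using KX by simp
    then have "T' (u - v) (u' - v') = 0" by (simp add: T'lin)
    then have "T (u - v) (u' - v') = 0" using K xy by (simp add: vecs_diff)
    then show "x = y" using xy by (simp add: Tlin)
  qed
  define Cs where "Cs = psi ` Bk"
  have Cs_ind: "VS.independent Cs"
    unfolding Cs_def by (rule VSP.linear_independent_injective_image[OF psi_lin Bk(2)]) (simp add: spanBk psi_inj)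
  have CsV: "Cs \<subseteq> vecs n"
  proof
    fix c assume "c \<in> Cs"
    then obtain b where "b \<in> Bk" "c = psi b" unfolding Cs_def by blast
    then obtain u u' where "b = T u u'" "u \<in> vecs n" "u' \<in> vecs n" using Bk(1) unfolding R_def by blast
    then show "c \<in> vecs n" using \<open>c = psi b\<close> KX Tv by simp
  qed
  have BkV: "Bk \<subseteq> vecs n" using Bk(1) RV by blast
  obtain Bs where Bs: "Bk \<subseteq> Bs" "Bs \<subseteq> vecs n" "VS.independent Bs" "vecs n \<subseteq> VS.span Bs"
    using VS.maximal_independent_subset_extend[OF BkV Bk(2)] by blast
  obtain Bs' where Bs': "Cs \<subseteq> Bs'" "Bs' \<subseteq> vecs n" "VS.independent Bs'" "vecs n \<subseteq> VS.span Bs'"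
    using VS.maximal_independent_subset_extend[OF CsV Cs_ind] by blast
  have cB: "finite Bs" "card Bs = n" using basis_card[OF Bs(2,4,3)] by auto
  have cB': "finite Bs'" "card Bs' = n" using basis_card[OF Bs'(2,4,3)] by auto
  have injBk: "inj_on psi Bk" using psi_inj Bk(1) inj_on_subset by blast
  have bijBk: "bij_betw psi Bk Cs" unfolding Cs_def using injBk by (simp add: bij_betw_imageI)
  have cC: "card Cs = card Bk" using bij_betw_same_card[OF bijBk] by simp
  have "card (Bs - Bk) = card (Bs' - Cs)"
    using cB cB' cC Bs(1) Bs'(1) fBk by (simp add: card_Diff_subset finite_subset)
  then obtain h where h: "bij_betw h (Bs - Bk) (Bs' - Cs)"
    using finite_same_card_bij[of "Bs - Bk" "Bs' - Cs"] cB cB' by auto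
  define g where "g b = (if b \<in> Bk then psi b else h b)" for b
  have "bij_betw g Bk Cs" using bijBk by (rule bij_betw_cong[THEN iffD1, rotated]) (simp add: g_def)
  moreover have "bij_betw g (Bs - Bk) (Bs' - Cs)" using h by (rule bij_betw_cong[THEN iffD1, rotated]) (simp add: g_def)
  ultimately have "bij_betw g (Bk \<union> (Bs - Bk)) (Cs \<union> (Bs' - Cs))" by (rule bij_betw_combine) auto
  moreover have "Bk \<union> (Bs - Bk) = Bs" "Cs \<union> (Bs' - Cs) = Bs'" using Bs(1) Bs'(1) by auto
  ultimately have gb: "bij_betw g Bs Bs'" by simp
  define X where "X = VSP.construct Bs g"
  define Y where "Y = VSP.construct Bs' (the_inv_into Bs g)"
  have Xl: "Vector_Spaces.linear sc sc X" unfolding X_def by (rule VSP.linear_construct[OF Bs(3)])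
  have Yl: "Vector_Spaces.linear sc sc Y" unfolding Y_def by (rule VSP.linear_construct[OF Bs'(3)])
  have XB: "X b = g b" if "b \<in> Bs" for b unfolding X_def by (rule VSP.construct_basis[OF Bs(3) that])
  have YB: "Y b = the_inv_into Bs g b" if "b \<in> Bs'" for b unfolding Y_def by (rule VSP.construct_basis[OF Bs'(3) that])
  have XR: "X r = psi r" if "r \<in> R" for r
    by (rule VSP.linear_eq_on_span[OF Xl psi_lin, of Bk]) (use that spanBk Bs(1) XB g_def in auto)
  have XT: "X (T u u') = T' u u'" if "u \<in> vecs n" "u' \<in> vecs n" for u u'
  proof -
    have "T u u' \<in> R" unfolding R_def using that by blast
    then show ?thesis using XR KX[OF that] by simp
  qed
  have XimB: "X ` Bs = Bs'" using gb XB by (auto simp: bij_betw_def)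
  have YimB: "Y ` Bs' = Bs" using bij_betw_the_inv_into[OF gb] YB by (auto simp: bij_betw_def)
  have spB: "VS.span Bs = vecs n" using Bs VS.span_minimal[OF Bs(2) vecs_subspace] by blast
  have spB': "VS.span Bs' = vecs n" using Bs' VS.span_minimal[OF Bs'(2) vecs_subspace] by blast
  have XV: "X v \<in> vecs n" if "v \<in> vecs n" for v
    using that VSP.linear_span_image[OF Xl, of Bs] XimB spB spB' by auto
  have YV: "Y v \<in> vecs n" if "v \<in> vecs n" for v
    using that VSP.linear_span_image[OF Yl, of Bs'] YimB spB spB' by auto
  have XY: "X (Y v) = v" if "v \<in> vecs n" for v
  proof -
    have "(X \<circ> Y) v = id v"
    proof (rule VSP.linear_eq_on_span[OF Vector_Spaces.linear_compose[OF Yl Xl] VS.linear_id, of Bs'])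
      fix b assume b: "b \<in> Bs'"
      have "the_inv_into Bs g b \<in> Bs" using bij_betw_the_inv_into[OF gb] b by (auto simp: bij_betw_def)
      then show "(X \<circ> Y) b = id b" using YB[OF b] XB f_the_inv_into_f_bij_betw[OF gb] b by simp
    qed (use that spB' in auto)
    then show ?thesis by simp
  qed
  have YX: "Y (X v) = v" if "v \<in> vecs n" for v
  proof -
    have "(Y \<circ> X) v = id v"
    proof (rule VSP.linear_eq_on_span[OF Vector_Spaces.linear_compose[OF Xl Yl] VS.linear_id, of Bs])
      fix b assume b: "b \<in> Bs"
      have "g b \<in> Bs'" using gb b by (auto simp: bij_betw_def)
      then show "(Y \<circ> X) b = id b" using XB[OF b] YB the_inv_into_f_f[OF bij_betw_imp_inj_on[OF gb] b] by simp
    qed (use that spB in auto)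
    then show ?thesis by simp
  qed
  define Xm where "Xm = (\<lambda>k l. X (ev l) k)"
  define Ym where "Ym = (\<lambda>k l. Y (ev l) k)"
  have Xm: "mv n Xm f = X f" if "f \<in> vecs n" for f unfolding Xm_def by (rule mat_rep[OF Xl XV that])
  have Ym: "mv n Ym f = Y f" if "f \<in> vecs n" for f unfolding Ym_def by (rule mat_rep[OF Yl YV that])
  have "meq n (mm n Xm Ym) idm"
    unfolding meq_def
  proof (intro allI impI)
    fix k l assume kl: "k < n" "l < n"
    have "mm n Xm Ym k l = X (Y (ev l)) k" using mm_col[OF kl(2,1)] Xm Ym YV ev_vecs kl by simp
    then show "mm n Xm Ym k l = idm k l" using XY ev_vecs[OF kl(2)] by (simp add: ev_def idm_def)
  qed
  moreover have "meq n (mm n Ym Xm) idm"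
    unfolding meq_def
  proof (intro allI impI)
    fix k l assume kl: "k < n" "l < n"
    have "mm n Ym Xm k l = Y (X (ev l)) k" using mm_col[OF kl(2,1)] Xm Ym XV ev_vecs kl by simp
    then show "mm n Ym Xm k l = idm k l" using YX ev_vecs[OF kl(2)] by (simp add: ev_def idm_def)
  qed
  ultimately have bm: "bij_mat n Xm" unfolding bij_mat_def by blast
  have mA: "meq n A' (mm n Xm A)"
    unfolding meq_def
  proof (intro allI impI)
    fix k l assume kl: "k < n" "l < n"
    have "mv n A (ev l) = T (ev l) 0" by (simp add: T_def mv_zero)
    then have "X (mv n A (ev l)) = mv n A' (ev l)" using XT[OF ev_vecs[OF kl(2)] zero_vecs] by (simp add: T'_def mv_zero)
    then have "mm n Xm A k l = mv n A' (ev l) k" using mm_col[OF kl(2,1)] Xm by simp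
    then show "A' k l = mm n Xm A k l" using col_mv[OF kl(2)] kl by simp
  qed
  have mB: "meq n B' (mm n Xm B)"
    unfolding meq_def
  proof (intro allI impI)
    fix k l assume kl: "k < n" "l < n"
    have "- mv n B (ev l) = T 0 (ev l)" by (simp add: T_def mv_zero)
    then have "X (- mv n B (ev l)) = - mv n B' (ev l)" using XT[OF zero_vecs ev_vecs[OF kl(2)]] by (simp add: T'_def mv_zero)
    then have "X (mv n B (ev l)) = mv n B' (ev l)" by (simp add: VSP.linear_neg[OF Xl])
    then have "mm n Xm B k l = mv n B' (ev l) k" using mm_col[OF kl(2,1)] Xm by simp
    then show "B' k l = mm n Xm B k l" using col_mv[OF kl(2)] kl by simp
  qed
  show ?thesis using bm mA mB by blast
qed

lemma LA:
  "{(u, u'). u \<in> vecs n \<and> u' \<in> vecs n \<and> mv n A u = mv n B u'}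
     = {(u, u'). u \<in> vecs n \<and> u' \<in> vecs n \<and> mv n A' u = mv n B' u'}
   \<longleftrightarrow> (\<exists>X. bij_mat n X \<and> meq n A' (mm n X A) \<and> meq n B' (mm n X B))"
proof
  assume E: "{(u, u'). u \<in> vecs n \<and> u' \<in> vecs n \<and> mv n A u = mv n B u'}
     = {(u, u'). u \<in> vecs n \<and> u' \<in> vecs n \<and> mv n A' u = mv n B' u'}"
  show "\<exists>X. bij_mat n X \<and> meq n A' (mm n X A) \<and> meq n B' (mm n X B)"
  proof (rule LA_hard)
    fix u u' assume uv: "u \<in> vecs n" "u' \<in> vecs n"
    have "mv n A u = mv n B u' \<longleftrightarrow> mv n A' u = mv n B' u'"
      using E uv by (auto simp: set_eq_iff)
    then show "(mv n A u - mv n B u' = 0) = (mv n A' u - mv n B' u' = 0)" by simp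
  qed
next
  assume "\<exists>X. bij_mat n X \<and> meq n A' (mm n X A) \<and> meq n B' (mm n X B)"
  then obtain X Y where X: "meq n (mm n Y X) idm" and a: "meq n A' (mm n X A)" and b: "meq n B' (mm n X B)"
    unfolding bij_mat_def by blast
  have e: "mv n A' u = mv n B' u' \<longleftrightarrow> mv n A u = mv n B u'" for u u'
  proof
    assume "mv n A u = mv n B u'"
    then show "mv n A' u = mv n B' u'" using mv_meq[OF a] mv_meq[OF b] by (simp add: mv_mm)
  next
    assume "mv n A' u = mv n B' u'"
    then have "mv n X (mv n A u) = mv n X (mv n B u')" using mv_meq[OF a] mv_meq[OF b] by (simp add: mv_mm)
    then have "mv n Y (mv n X (mv n A u)) = mv n Y (mv n X (mv n B u'))" by simp
    moreover have yx: "mv n Y (mv n X v) = v" if "v \<in> vecs n" for v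
      by (metis mv_mm mv_meq[OF X] mv_idm that)
    ultimately show "mv n A u = mv n B u'" by (simp only: yx mv_vecs)
  qed
  show "{(u, u'). u \<in> vecs n \<and> u' \<in> vecs n \<and> mv n A u = mv n B u'}
     = {(u, u'). u \<in> vecs n \<and> u' \<in> vecs n \<and> mv n A' u = mv n B' u'}"
    using e by auto
qed



lemma DTheta_inj:
  assumes wf: "wf_graph G" and T1: "Th1 \<subseteq> vecs (NN G) \<times> vecs (NN G)" and T2: "Th2 \<subseteq> vecs (NN G) \<times> vecs (NN G)"
    and E: "DTheta G m Th1 = DTheta G m Th2"
  shows "Th1 = Th2"
proof -
  have *: "p \<in> Tb" if "p \<in> Ta" "Ta \<subseteq> vecs (NN G) \<times> vecs (NN G)" "DTheta G m Ta = DTheta G m Tb" for p Ta Tb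
  proof -
    obtain x y where p: "p = (x, y)" by fastforce
    then have "x \<in> vecs (NN G)" "y \<in> vecs (NN G)" using that by auto
    then obtain Phi Psi where "(Phi, Psi) \<in> Dmax G m" "gam1 G Phi = x" "gam2 G Phi = y"
      using bsurj[OF wf] by blast
    then have "(Phi, Psi) \<in> DTheta G m Ta" unfolding DTheta_def using that p by simp
    then have "(Phi, Psi) \<in> DTheta G m Tb" using that by simp
    then show ?thesis unfolding DTheta_def using p \<open>gam1 G Phi = x\<close> \<open>gam2 G Phi = y\<close> by simp
  qed
  show ?thesis using *[OF _ T1 E] *[OF _ T2 E[symmetric]] by blast
qed

definition cv :: "cvec \<Rightarrow> cvec" where "cv f = (\<lambda>k. cnj (f k))"

lemma cv_mv: "cv (mv n M f) = mv n (cnjm M) (cv f)"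
  unfolding cv_def mv_def cnjm_def by (auto intro!: ext)

lemma cnjm_W: "cnjm (Wm G) = Wm G"
  unfolding cnjm_def Wm_def by (auto intro!: ext)

lemma cnjm_Vt: assumes "wf_graph G" shows "cnjm (Vt G) = (\<lambda>k l. - Vt G k l)"
proof (intro ext)
  fix k l show "cnjm (Vt G) k l = - Vt G k l"
  proof (cases "k = l \<and> k < NN G")
    case True then show ?thesis using Vt_diag[OF assms] by (auto simp: cnjm_def)
  next
    case False then show ?thesis by (auto simp: cnjm_def Vt_def)
  qed
qed

lemma mv_negm: "mv n (\<lambda>k l. - M k l) f = (\<lambda>k. - mv n M f k)"
  unfolding mv_def by (auto intro!: ext simp: sum_negf)

lemma cv_inj: "cv f = cv g \<longleftrightarrow> f = g"
  unfolding cv_def by (metis complex_cnj_cnj ext)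

lemma cv_neg: "cv (\<lambda>k. - f k) = (\<lambda>k. - cv f k)"
  unfolding cv_def by simp

definition preW :: "('j,'v) mgraph \<Rightarrow> (cvec \<times> cvec) set \<Rightarrow> (cvec \<times> cvec) set" where
  "preW G S = {(g, g'). g \<in> vecs (NN G) \<and> g' \<in> vecs (NN G) \<and> (mv (NN G) (Wm G) g, mv (NN G) (Wm G) g') \<in> S}"

lemma preW_inj:
  assumes wf: "wf_graph G" and S1: "S1 \<subseteq> vecs (NN G) \<times> vecs (NN G)" and S2: "S2 \<subseteq> vecs (NN G) \<times> vecs (NN G)"
    and E: "preW G S1 = preW G S2"
  shows "S1 = S2"
proof -
  have *: "p \<in> Sb" if "p \<in> Sa" "Sa \<subseteq> vecs (NN G) \<times> vecs (NN G)" "preW G Sa = preW G Sb" for p Sa Sb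
  proof -
    obtain u u' where p: "p = (u, u')" by fastforce
    then have v: "u \<in> vecs (NN G)" "u' \<in> vecs (NN G)" using that by auto
    have "(mv (NN G) (Winv G) u, mv (NN G) (Winv G) u') \<in> preW G Sa"
      unfolding preW_def using W_Winv_apply[OF wf] v that p by simp
    then have "(mv (NN G) (Winv G) u, mv (NN G) (Winv G) u') \<in> preW G Sb" using that by simp
    then show ?thesis unfolding preW_def using W_Winv_apply[OF wf] v p by simp
  qed
  show ?thesis using *[OF _ S1 E] *[OF _ S2 E[symmetric]] by blast
qed

definition KK :: "nat \<Rightarrow> cmat \<Rightarrow> cmat \<Rightarrow> (cvec \<times> cvec) set" where
  "KK n A B = {(u, u'). u \<in> vecs n \<and> u' \<in> vecs n \<and> mv n A u = mv n B u'}"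

lemma matpart:
  assumes wf: "wf_graph G"
    and Lam: "Lam = {(f, f'). f \<in> vecs (NN G) \<and> f' \<in> vecs (NN G) \<and> mv (NN G) A f = mv (NN G) B f'}"
  shows "LamW G Lam = LamC G Lam \<longleftrightarrow>
          (\<exists>X. bij_mat (NN G) X
             \<and> meq (NN G) (mm (NN G) (cnjm B) (mm (NN G) (Wm G) (mm (NN G) (Vt G) (Winv G))))
                          (mm (NN G) X A)
             \<and> meq (NN G) (mm (NN G) (cnjm A) (mm (NN G) (Wm G) (mm (NN G) (Vt G) (Winv G))))
                          (mm (NN G) X B))"
proof -
  let ?N = "NN G" and ?W = "Wm G" and ?Wi = "Winv G" and ?V = "Vt G"
  let ?P = "mm ?N ?W (mm ?N ?V ?Wi)"
  let ?A' = "mm ?N (cnjm B) ?P" and ?B' = "mm ?N (cnjm A) ?P"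
  have LW: "LamW G Lam = preW G (KK ?N A B)"
    unfolding LamW_def preW_def KK_def Lam by auto
  have P: "mv ?N ?P (mv ?N ?W g) = mv ?N ?W (mv ?N ?V g)" if "g \<in> vecs ?N" for g
    using that by (simp add: mv_mm Winv_W_apply[OF wf])
  have cvVC: "cv (VC G g) = (\<lambda>k. - mv ?N ?V g k)" for g
  proof -
    have "cv (VC G g) = mv ?N (cnjm ?V) (cv (\<lambda>k. cnj (g k)))" unfolding VC_def by (rule cv_mv)
    also have "cv (\<lambda>k. cnj (g k)) = g" by (simp add: cv_def)
    finally show ?thesis by (simp add: cnjm_Vt[OF wf] mv_negm)
  qed
  have side: "cv (mv ?N M (mv ?N ?W (VC G g))) = (\<lambda>k. - mv ?N (mm ?N (cnjm M) ?P) (mv ?N ?W g) k)"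
    if "g \<in> vecs ?N" for g M
  proof -
    have "cv (mv ?N M (mv ?N ?W (VC G g))) = mv ?N (cnjm M) (mv ?N ?W (\<lambda>k. - mv ?N ?V g k))"
      by (simp only: cv_mv cnjm_W cvVC)
    also have "\<dots> = (\<lambda>k. - mv ?N (cnjm M) (mv ?N ?W (mv ?N ?V g)) k)"
      by (simp only: mv_neg)
    also have "\<dots> = (\<lambda>k. - mv ?N (mm ?N (cnjm M) ?P) (mv ?N ?W g) k)"
      by (simp only: P[OF that, symmetric] mv_mm)
    finally show ?thesis .
  qed
  have C2b: "mv ?N A (mv ?N ?W (VC G g')) = mv ?N B (mv ?N ?W (VC G g))
      \<longleftrightarrow> mv ?N ?A' (mv ?N ?W g) = mv ?N ?B' (mv ?N ?W g')" if "g \<in> vecs ?N" "g' \<in> vecs ?N" for g g'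
  proof -
    have "mv ?N A (mv ?N ?W (VC G g')) = mv ?N B (mv ?N ?W (VC G g))
        \<longleftrightarrow> cv (mv ?N A (mv ?N ?W (VC G g'))) = cv (mv ?N B (mv ?N ?W (VC G g)))"
      by (simp add: cv_inj)
    also have "\<dots> \<longleftrightarrow> (\<lambda>k. - mv ?N ?B' (mv ?N ?W g') k) = (\<lambda>k. - mv ?N ?A' (mv ?N ?W g) k)"
      using that by (simp only: side)
    also have "\<dots> \<longleftrightarrow> mv ?N ?A' (mv ?N ?W g) = mv ?N ?B' (mv ?N ?W g')"
      by (metis (no_types, lifting) ext minus_equation_iff)
    finally show ?thesis .
  qed
  have LC: "LamC G Lam = preW G (KK ?N ?A' ?B')"
  proof
    show "LamC G Lam \<subseteq> preW G (KK ?N ?A' ?B')"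
    proof
      fix p assume "p \<in> LamC G Lam"
      then obtain f f' where p: "p = (VC G (mv ?N ?Wi f'), VC G (mv ?N ?Wi f))" and ff: "(f, f') \<in> Lam"
        unfolding LamC_def by blast
      have fv: "f \<in> vecs ?N" "f' \<in> vecs ?N" "mv ?N A f = mv ?N B f'" using ff Lam by auto
      let ?g = "VC G (mv ?N ?Wi f')" and ?g' = "VC G (mv ?N ?Wi f)"
      have "mv ?N ?W (VC G ?g') = f" "mv ?N ?W (VC G ?g) = f'"
        using fv VC_VC[OF wf] W_Winv_apply[OF wf] by simp_all
      then have "mv ?N ?A' (mv ?N ?W ?g) = mv ?N ?B' (mv ?N ?W ?g')"
        using C2b[of ?g ?g'] fv by simp
      then show "p \<in> preW G (KK ?N ?A' ?B')" unfolding p preW_def KK_def by simp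
    qed
    show "preW G (KK ?N ?A' ?B') \<subseteq> LamC G Lam"
    proof
      fix p assume "p \<in> preW G (KK ?N ?A' ?B')"
      then obtain g g' where p: "p = (g, g')" and gv: "g \<in> vecs ?N" "g' \<in> vecs ?N"
        and e: "mv ?N ?A' (mv ?N ?W g) = mv ?N ?B' (mv ?N ?W g')"
        unfolding preW_def KK_def by auto
      let ?f = "mv ?N ?W (VC G g')" and ?f' = "mv ?N ?W (VC G g)"
      have "(?f, ?f') \<in> Lam" using C2b[OF gv] e Lam by simp
      moreover have "g = VC G (mv ?N ?Wi ?f')" "g' = VC G (mv ?N ?Wi ?f)"
        using Winv_W_apply[OF wf] VC_VC[OF wf] gv by simp_all
      ultimately show "p \<in> LamC G Lam" unfolding LamC_def p by blast
    qed
  qed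
  have KKs: "KK n A0 B0 \<subseteq> vecs n \<times> vecs n" for n A0 B0 unfolding KK_def by auto
  have "LamW G Lam = LamC G Lam \<longleftrightarrow> KK ?N A B = KK ?N ?A' ?B'"
    unfolding LW LC using preW_inj[OF wf KKs[of ?N A B] KKs[of ?N ?A' ?B']] by metis
  also have "\<dots> \<longleftrightarrow> (\<exists>X. bij_mat ?N X \<and> meq ?N ?A' (mm ?N X A) \<and> meq ?N ?B' (mm ?N X B))"
    unfolding KK_def by (rule LA)
  finally show ?thesis .
qed

theorem corollary4p22:
  fixes G :: "('j, 'v) mgraph" and m :: real and Lam :: "(cvec \<times> cvec) set"
  assumes "wf_graph G" and "m \<ge> 0" and "lin_rel (NN G) Lam"
  shows "(Csym (DTheta G m (LamW G Lam)) \<longleftrightarrow> LamW G Lam = LamC G Lam)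
    \<and> (\<forall>A B. Lam = {(f, f'). f \<in> vecs (NN G) \<and> f' \<in> vecs (NN G)
                            \<and> mv (NN G) A f = mv (NN G) B f'} \<longrightarrow>
         (LamW G Lam = LamC G Lam \<longleftrightarrow>
          (\<exists>X. bij_mat (NN G) X
             \<and> meq (NN G) (mm (NN G) (cnjm B) (mm (NN G) (Wm G) (mm (NN G) (Vt G) (Winv G))))
                          (mm (NN G) X A)
             \<and> meq (NN G) (mm (NN G) (cnjm A) (mm (NN G) (Wm G) (mm (NN G) (Vt G) (Winv G))))
                          (mm (NN G) X B))))
    \<and> (\<forall>lam.
         (lam \<in> spec_p (Hsp G) (nrm G) (DTheta G m (LamW G Lam))
            \<longleftrightarrow> - cnj lam \<in> spec_p (Hsp G) (nrm G) (DTheta G m (LamC G Lam)))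
       \<and> (lam \<in> spec_c (Hsp G) (nrm G) (DTheta G m (LamW G Lam))
            \<longleftrightarrow> - cnj lam \<in> spec_c (Hsp G) (nrm G) (DTheta G m (LamC G Lam)))
       \<and> (lam \<in> spec_r (Hsp G) (nrm G) (DTheta G m (LamW G Lam))
            \<longleftrightarrow> - cnj lam \<in> spec_r (Hsp G) (nrm G) (DTheta G m (LamC G Lam)))
       \<and> (lam \<in> spec_d (Hsp G) (nrm G) (DTheta G m (LamW G Lam))
            \<longleftrightarrow> - cnj lam \<in> spec_d (Hsp G) (nrm G) (DTheta G m (LamC G Lam)))
       \<and> (lam \<in> spec_ess (Hsp G) (nrm G) (DTheta G m (LamW G Lam))
            \<longleftrightarrow> - cnj lam \<in> spec_ess (Hsp G) (nrm G) (DTheta G m (LamC G Lam))))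
    \<and> (Csym (DTheta G m (LamW G Lam)) \<longrightarrow>
         (\<forall>lam. lam \<in> spec (Hsp G) (nrm G) (DTheta G m (LamW G Lam))
                \<longleftrightarrow> - cnj lam \<in> spec (Hsp G) (nrm G) (DTheta G m (LamW G Lam))))"
proof -
  note wf = assms(1) and L = assms(3)
  have gp: "GP (DTheta G m (LamW G Lam)) (DTheta G m (LamC G Lam))" by (rule GP_main[OF wf L])
  have tp: "Tpair (DTheta G m (LamW G Lam)) (DTheta G m (LamC G Lam))" using gp unfolding GP_def by blast
  have LCs: "LamC G Lam \<subseteq> vecs (NN G) \<times> vecs (NN G)" unfolding LamC_def by auto
  have p1: "Csym (DTheta G m (LamW G Lam)) \<longleftrightarrow> LamW G Lam = LamC G Lam"
    using Csym_iff[OF tp] DTheta_inj[OF wf LamW_sub LCs] by metis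
  show ?thesis
  proof (intro conjI allI impI)
    show "Csym (DTheta G m (LamW G Lam)) = (LamW G Lam = LamC G Lam)" by (rule p1)
  next
    fix A B
    assume "Lam = {(f, f'). f \<in> vecs (NN G) \<and> f' \<in> vecs (NN G) \<and> mv (NN G) A f = mv (NN G) B f'}"
    then show "(LamW G Lam = LamC G Lam) = (\<exists>X. bij_mat (NN G) X
             \<and> meq (NN G) (mm (NN G) (cnjm B) (mm (NN G) (Wm G) (mm (NN G) (Vt G) (Winv G))))
                          (mm (NN G) X A)
             \<and> meq (NN G) (mm (NN G) (cnjm A) (mm (NN G) (Wm G) (mm (NN G) (Vt G) (Winv G))))
                          (mm (NN G) X B))"
      by (rule matpart[OF wf])
  next
    fix lam
    show "(lam \<in> spec_p (Hsp G) (nrm G) (DTheta G m (LamW G Lam))) =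
          (- cnj lam \<in> spec_p (Hsp G) (nrm G) (DTheta G m (LamC G Lam)))" by (rule specp_iff[OF gp])
    show "(lam \<in> spec_c (Hsp G) (nrm G) (DTheta G m (LamW G Lam))) =
          (- cnj lam \<in> spec_c (Hsp G) (nrm G) (DTheta G m (LamC G Lam)))" by (rule specc_iff[OF gp])
    show "(lam \<in> spec_r (Hsp G) (nrm G) (DTheta G m (LamW G Lam))) =
          (- cnj lam \<in> spec_r (Hsp G) (nrm G) (DTheta G m (LamC G Lam)))" by (rule specr_iff[OF gp])
    show "(lam \<in> spec_d (Hsp G) (nrm G) (DTheta G m (LamW G Lam))) =
          (- cnj lam \<in> spec_d (Hsp G) (nrm G) (DTheta G m (LamC G Lam)))" by (rule specd_iff[OF gp])
    show "(lam \<in> spec_ess (Hsp G) (nrm G) (DTheta G m (LamW G Lam))) =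
          (- cnj lam \<in> spec_ess (Hsp G) (nrm G) (DTheta G m (LamC G Lam)))" by (rule specess_iff[OF gp])
  next
    fix lam assume c: "Csym (DTheta G m (LamW G Lam))"
    then have e: "DTheta G m (LamW G Lam) = DTheta G m (LamC G Lam)" using Csym_iff[OF tp] by blast
    show "(lam \<in> spec (Hsp G) (nrm G) (DTheta G m (LamW G Lam))) =
          (- cnj lam \<in> spec (Hsp G) (nrm G) (DTheta G m (LamW G Lam)))"
      using spec_iff[OF gp, of lam] e by simp
  qed
qed


end
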